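(* For each gadget $G\in\{A,B\}$, let $R_G=J_1^GJ_0^G$ and let $\mu_G$ be its dominant eigenvalue (numerically $\mu_A\approx 0.0944920594891271$, $\mu_B\approx0.2038817328642625$). Let $v_0^G$ be a corresponding eigenvector normalized so that its first entry (its $p$-component) equals $1$, and set $v_1^G=DS_G\,v_0^G$. Then, with $c_G:=\sqrt{\mu_G}>0$, $$J_0^Gv_0^G=c_Gv_1^G,\qquad J_1^Gv_1^G=c_Gv_0^G.$$
   Context: Let $$L_A=\begin{pmatrix}1&1&-1&-1\\-1&1&1&1\\1&-1&-1&1\\1&-1&1&-1\end{pmatrix},\qquad L_B=\begin{pmatrix}1&1&-1&-1\\-1&1&1&1\\1&-1&-1&1\\1&-1&1&-1\\1&-1&1&1\end{pmatrix}.$$ For a sign matrix $L$ and a distribution $u$ on its rows, the one-step AdaBoost update using column $j$ is $u'_i=u_i/(1+\mu L_{ij})$ with $\mu=(u^\top L)_j$. Chart coordinates: $(p,d)$ corresponds to $(p-\tfrac12,1-p,\tfrac12-d,d)$ on the rows of $L_A$, and $(p,d,e)$ to $(p-\tfrac12,1-p,\tfrac12-d-e,d,e)$ on the rows of $L_B$. For $G\in\{A,B\}$, $F_0^G$ (resp. $F_1^G$) is the rational map in chart coordinates obtained by composing the five one-step updates on $L_G$ with columns $1,3,4,1,2$ (resp. $1,4,3,1,2$). Let $p_*$ be the unique root of $f(p)=1024p^7-3072p^6+3200p^5-1152p^4-144p^3+176p^2-40p+7$ in $[0.637116837818846,\,0.637116837818848]$, and $d_*=512p_*^6-1152p_*^5+736p_*^4-24p_*^3-88p_*^2+19p_*-\tfrac92\approx0.25799538$.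 Set $\hat P_0^A=(p_*,d_* )$, $\hat P_1^A=(p_*,\tfrac12-d_* )$, $\hat P_0^B=(p_*,d_*,0)$, $\hat P_1^B=(p_*,\tfrac12-d_*,0)$ (then $F_0^G(\hat P_0^G)=\hat P_1^G$ and $F_1^G(\hat P_1^G)=\hat P_0^G$). Let $J_i^G=DF_i^G(\hat P_i^G)$ be the Jacobian matrices. Let $DS_A=\begin{pmatrix}1&0\\0&-1\end{pmatrix}$ and $DS_B=\begin{pmatrix}1&0&0\\0&-1&-1\\0&0&1\end{pmatrix}$ (the differentials of the phase-swap involutions $S_A(p,d)=(p,\tfrac12-d)$, $S_B(p,d,e)=(p,\tfrac12-d-e,e)$). *)

theory Defs
  imports "HOL-Analysis.Analysis"
begin

text \<open>Sign matrices, rows and columns indexed from 1 (as in the paper).\<close>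

definition LA :: "nat \<Rightarrow> nat \<Rightarrow> real" where
  "LA i j = ([[1,1,-1,-1],[-1,1,1,1],[1,-1,-1,1],[1,-1,1,-1]] :: real list list) ! (i - 1) ! (j - 1)"

definition LB :: "nat \<Rightarrow> nat \<Rightarrow> real" where
  "LB i j = ([[1,1,-1,-1],[-1,1,1,1],[1,-1,-1,1],[1,-1,1,-1],[1,-1,1,1]] :: real list list) ! (i - 1) ! (j - 1)"

definition ada_step :: "(nat \<Rightarrow> nat \<Rightarrow> real) \<Rightarrow> nat \<Rightarrow> nat \<Rightarrow> (nat \<Rightarrow> real) \<Rightarrow> (nat \<Rightarrow> real)" where
  "ada_step L m j u = (let mu = (\<Sum>i\<in>{1..m}. u i * L i j) in (\<lambda>i. u i / (1 + mu * L i j)))"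

definition ada_run :: "(nat \<Rightarrow> nat \<Rightarrow> real) \<Rightarrow> nat \<Rightarrow> nat list \<Rightarrow> (nat \<Rightarrow> real) \<Rightarrow> (nat \<Rightarrow> real)" where
  "ada_run L m cs u = fold (ada_step L m) cs u"

definition chartA :: "real^2 \<Rightarrow> (nat \<Rightarrow> real)" where
  "chartA x = (\<lambda>i. if i = 1 then x$1 - 1/2 else if i = 2 then 1 - x$1
                   else if i = 3 then 1/2 - x$2 else if i = 4 then x$2 else 0)"

definition unchartA :: "(nat \<Rightarrow> real) \<Rightarrow> real^2" where
  "unchartA u = vector [1 - u 2, u 4]"

definition chartB :: "real^3 \<Rightarrow> (nat \<Rightarrow> real)" where
  "chartB x = (\<lambda>i. if i = 1 then x$1 - 1/2 else if i = 2 then 1 - x$1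
                   else if i = 3 then 1/2 - x$2 - x$3 else if i = 4 then x$2
                   else if i = 5 then x$3 else 0)"

definition unchartB :: "(nat \<Rightarrow> real) \<Rightarrow> real^3" where
  "unchartB u = vector [1 - u 2, u 4, u 5]"

definition F0A :: "real^2 \<Rightarrow> real^2" where "F0A x = unchartA (ada_run LA 4 [1,3,4,1,2] (chartA x))"
definition F1A :: "real^2 \<Rightarrow> real^2" where "F1A x = unchartA (ada_run LA 4 [1,4,3,1,2] (chartA x))"
definition F0B :: "real^3 \<Rightarrow> real^3" where "F0B x = unchartB (ada_run LB 5 [1,3,4,1,2] (chartB x))"
definition F1B :: "real^3 \<Rightarrow> real^3" where "F1B x = unchartB (ada_run LB 5 [1,4,3,1,2] (chartB x))"

definition fpoly :: "real \<Rightarrow> real" where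
  "fpoly p = 1024*p^7 - 3072*p^6 + 3200*p^5 - 1152*p^4 - 144*p^3 + 176*p^2 - 40*p + 7"

definition p_star :: real where
  "p_star = (THE p. p \<in> {0.637116837818846..0.637116837818848} \<and> fpoly p = 0)"

definition d_star :: real where
  "d_star = 512*p_star^6 - 1152*p_star^5 + 736*p_star^4 - 24*p_star^3 - 88*p_star^2 + 19*p_star - 9/2"

definition P0A :: "real^2" where "P0A = vector [p_star, d_star]"
definition P1A :: "real^2" where "P1A = vector [p_star, 1/2 - d_star]"
definition P0B :: "real^3" where "P0B = vector [p_star, d_star, 0]"
definition P1B :: "real^3" where "P1B = vector [p_star, 1/2 - d_star, 0]"

definition jacobian :: "(real^'n \<Rightarrow> real^'m) \<Rightarrow> real^'n \<Rightarrow> real^'n^'m" where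
  "jacobian F P = matrix (frechet_derivative F (at P))"

definition J0A :: "real^2^2" where "J0A = jacobian F0A P0A"
definition J1A :: "real^2^2" where "J1A = jacobian F1A P1A"
definition J0B :: "real^3^3" where "J0B = jacobian F0B P0B"
definition J1B :: "real^3^3" where "J1B = jacobian F1B P1B"

definition DSA :: "real^2^2" where "DSA = vector [vector [1, 0], vector [0, -1]]"
definition DSB :: "real^3^3" where
  "DSB = vector [vector [1, 0, 0], vector [0, -1, -1], vector [0, 0, 1]]"

definition complex_eigenvalue :: "real^'n^'n \<Rightarrow> complex \<Rightarrow> bool" where
  "complex_eigenvalue R l \<longleftrightarrow>
     (\<exists>w :: complex^'n. w \<noteq> 0 \<and> (\<chi> i j. complex_of_real (R$i$j)) *v w = l *s w)"

definition dominant_eigenvalue :: "real^'n^'n \<Rightarrow> real \<Rightarrow> bool" where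
  "dominant_eigenvalue R mu \<longleftrightarrow>
     (\<exists>v. v \<noteq> 0 \<and> R *v v = mu *s v) \<and>
     (\<forall>l. complex_eigenvalue R l \<and> l \<noteq> complex_of_real mu \<longrightarrow> cmod l < \<bar>mu\<bar>)"

end

theory Submission
  imports Defs
begin

definition adg_step :: "(nat\<Rightarrow>nat\<Rightarrow>real) \<Rightarrow> nat \<Rightarrow> nat \<Rightarrow> (nat \<Rightarrow> real) \<times> (nat \<Rightarrow> 'a::real_inner) \<Rightarrow> (nat \<Rightarrow> real) \<times> (nat \<Rightarrow> 'a)" where
"adg_step L m j st = (let u = fst st; G = snd st; mu = (\<Sum>i\<in>{1..m}. u i * L i j);
   s = (\<Sum>l\<in>{1..m}. L l j *\<^sub>R G l)
  in (ada_step L m j u, \<lambda>i. (1/(1 + mu * L i j)) *\<^sub>R (G i - (u i/(1 + mu*L i j) * L i j) *\<^sub>R s)))"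

lemma step_deriv:
  fixes U :: "'a::real_inner \<Rightarrow> nat \<Rightarrow> real"
  assumes D: "\<forall>i\<in>{1..m}. ((\<lambda>x. U x i) has_derivative (\<lambda>h. G i \<bullet> h)) (at P)"
    and nz: "1 + (\<Sum>l\<in>{1..m}. U P l * L l j) * L i j \<noteq> 0" and i: "i \<in> {1..m}"
  shows "((\<lambda>x. ada_step L m j (U x) i) has_derivative (\<lambda>h. snd (adg_step L m j (U P, G)) i \<bullet> h)) (at P)"
proof -
  define mu where "mu = (\<Sum>l\<in>{1..m}. U P l * L l j)"
  define s where "s = (\<Sum>l\<in>{1..m}. L l j *\<^sub>R G l)"
  have dmu: "((\<lambda>x. \<Sum>l\<in>{1..m}. U x l * L l j) has_derivative (\<lambda>h. s \<bullet> h)) (at P)"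
  proof -
    have "((\<lambda>x. \<Sum>l\<in>{1..m}. U x l * L l j) has_derivative (\<lambda>h. \<Sum>l\<in>{1..m}. (G l \<bullet> h) * L l j)) (at P)"
      by (intro has_derivative_sum has_derivative_mult_left) (use D in auto)
    moreover have "(\<lambda>h. \<Sum>l\<in>{1..m}. (G l \<bullet> h) * L l j) = (\<lambda>h. s \<bullet> h)"
      by (auto simp: s_def inner_sum_left mult.commute)
    ultimately show ?thesis by simp
  qed
  have dden: "((\<lambda>x. 1 + (\<Sum>l\<in>{1..m}. U x l * L l j) * L i j) has_derivative (\<lambda>h. (s \<bullet> h) * L i j)) (at P)"
    using has_derivative_add[OF has_derivative_const[of 1] has_derivative_mult_left[OF dmu, of "L i j"]] by simp
  have "((\<lambda>x. U x i / (1 + (\<Sum>l\<in>{1..m}. U x l * L l j) * L i j)) has_derivative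
     (\<lambda>h. - U P i * (inverse (1 + mu * L i j) * ((s \<bullet> h) * L i j) * inverse (1 + mu * L i j)) + (G i \<bullet> h) / (1 + mu * L i j))) (at P)"
    using has_derivative_divide[OF D[rule_format, OF i] dden] nz by (simp add: mu_def)
  moreover have "(\<lambda>h. - U P i * (inverse (1 + mu * L i j) * ((s \<bullet> h) * L i j) * inverse (1 + mu * L i j)) + (G i \<bullet> h) / (1 + mu * L i j))
      = (\<lambda>h. snd (adg_step L m j (U P, G)) i \<bullet> h)"
  proof -
    have nz': "1 + mu * L i j \<noteq> 0" using nz by (simp add: mu_def)
    have e: "snd (adg_step L m j (U P, G)) i = (1/(1+mu*L i j)) *\<^sub>R (G i - (U P i/(1+mu*L i j) * L i j) *\<^sub>R s)"
      by (simp add: adg_step_def Let_def mu_def s_def)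
    show ?thesis unfolding e using nz' by (auto simp: inner_diff_left field_simps)
  qed
  ultimately show ?thesis by (simp add: ada_step_def Let_def)
qed

definition adg_run :: "(nat\<Rightarrow>nat\<Rightarrow>real) \<Rightarrow> nat \<Rightarrow> nat list \<Rightarrow> (nat \<Rightarrow> real) \<times> (nat \<Rightarrow> 'a::real_inner) \<Rightarrow> (nat \<Rightarrow> real) \<times> (nat \<Rightarrow> 'a)" where
  "adg_run L m cs st = fold (adg_step L m) cs st"

fun okrun :: "(nat\<Rightarrow>nat\<Rightarrow>real) \<Rightarrow> nat \<Rightarrow> nat list \<Rightarrow> (nat \<Rightarrow> real) \<Rightarrow> bool" where
  "okrun L m [] u = True"
| "okrun L m (j#cs) u = ((\<forall>i\<in>{1..m}. 1 + (\<Sum>l\<in>{1..m}. u l * L l j) * L i j \<noteq> 0) \<and> okrun L m cs (ada_step L m j u))"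

lemma fst_adg_step: "fst (adg_step L m j st) = ada_step L m j (fst st)"
  by (simp add: adg_step_def Let_def)

lemma run_deriv:
  fixes P :: "'a::real_inner"
  shows "\<forall>U G. (\<forall>i\<in>{1..m}. ((\<lambda>x. U x i) has_derivative (\<lambda>h. G i \<bullet> h)) (at P)) \<longrightarrow> okrun L m cs (U P) \<longrightarrow>
    (\<forall>i\<in>{1..m}. ((\<lambda>x. ada_run L m cs (U x) i) has_derivative (\<lambda>h. snd (adg_run L m cs (U P, G)) i \<bullet> h)) (at P))"
proof (induction cs)
  case Nil
  then show ?case by (simp add: ada_run_def adg_run_def)
next
  case (Cons j cs)
  show ?case
  proof (intro allI impI)
    fix U :: "'a \<Rightarrow> nat \<Rightarrow> real" and G :: "nat \<Rightarrow> 'a"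
    assume D: "\<forall>i\<in>{1..m}. ((\<lambda>x. U x i) has_derivative (\<lambda>h. G i \<bullet> h)) (at P)" and ok: "okrun L m (j # cs) (U P)"
    define U' where "U' = (\<lambda>x. ada_step L m j (U x))"
    define G' where "G' = snd (adg_step L m j (U P, G))"
    have D': "\<forall>i\<in>{1..m}. ((\<lambda>x. U' x i) has_derivative (\<lambda>h. G' i \<bullet> h)) (at P)"
      using step_deriv[OF D] ok by (auto simp: U'_def G'_def)
    have ok': "okrun L m cs (U' P)" using ok by (simp add: U'_def)
    have st: "adg_step L m j (U P, G) = (U' P, G')"
      by (metis G'_def U'_def fst_adg_step fst_conv prod.collapse)
    have "\<forall>i\<in>{1..m}. ((\<lambda>x. ada_run L m cs (U' x) i) has_derivative (\<lambda>h. snd (adg_run L m cs (U' P, G')) i \<bullet> h)) (at P)"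
      using Cons.IH D' ok' by blast
    then show "\<forall>i\<in>{1..m}. ((\<lambda>x. ada_run L m (j # cs) (U x) i) has_derivative (\<lambda>h. snd (adg_run L m (j # cs) (U P, G)) i \<bullet> h)) (at P)"
      by (simp add: ada_run_def adg_run_def U'_def st)
  qed
qed

lemma aux_d1: "d \<noteq> (0::real) \<Longrightarrow> 2 * ((1/d) * (g + (u/d) * s)) = 2*g/d + 2*u * s/d^2"
  by (simp add: field_simps power2_eq_square)
lemma aux_d2: "d \<noteq> (0::real) \<Longrightarrow> 2 * ((1/d) * (g - (u/d) * s)) = 2*g/d - 2*u * s/d^2"
  by (simp add: field_simps power2_eq_square)

lemma aux_z1: "(-s)/(d::real) + d * s/d^2 = 0"
  by (cases "d = 0") (simp_all add: power2_eq_square)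
lemma aux_z2: "s/(d::real) - d * s/d^2 = 0"
  by (cases "d = 0") (simp_all add: power2_eq_square)
lemma aux_h: "a \<noteq> 0 \<Longrightarrow> b \<noteq> 0 \<Longrightarrow> a/(2*a) + b/(2*b) = (1::real)"
  by simp

lemma inv_scalar:
  fixes u g e :: "nat \<Rightarrow> real"
  assumes fin: "finite S" and e: "\<forall>i\<in>S. e i = 1 \<or> e i = -1" and su: "(\<Sum>i\<in>S. u i) = 1" and sg: "(\<Sum>i\<in>S. g i) = 0"
  defines "mu \<equiv> (\<Sum>i\<in>S. u i * e i)" and "s \<equiv> (\<Sum>l\<in>S. e l * g l)"
  shows "(\<Sum>i\<in>S. (1 - e i) * ((1/(1+mu*e i)) * (g i - (u i/(1+mu*e i) * e i) * s))) = 0"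
    and "(\<Sum>i\<in>S. (1 + e i) * ((1/(1+mu*e i)) * (g i - (u i/(1+mu*e i) * e i) * s))) = 0"
proof -
  have t1: "(1 - e i) * ((1/(1+mu*e i)) * (g i - (u i/(1+mu*e i) * e i) * s)) = (1 - e i) * g i / (1 - mu) + (1 - e i) * u i * s / (1-mu)^2" if "i \<in> S" for i
  proof -
    have "e i = 1 \<or> e i = -1" using e that by auto
    then show ?thesis
    proof
      assume "e i = 1" then show ?thesis by simp
    next
      assume ei: "e i = -1" show ?thesis
      proof (cases "1 - mu = 0")
        case True then show ?thesis using ei by simp
      next
        case False
        have h: "1 + mu * e i = 1 - mu" "1 - e i = 2" using ei by simp_all
        have "(1 - e i) * ((1/(1+mu*e i)) * (g i - (u i/(1+mu*e i) * e i) * s)) = 2 * ((1/(1-mu)) * (g i + (u i/(1-mu)) * s))"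
          by (simp add: h ei)
        also have "\<dots> = 2*g i/(1-mu) + 2*u i * s/(1-mu)^2" using False by (rule aux_d1)
        finally show ?thesis by (simp add: h)
      qed
    qed
  qed
  have t2: "(1 + e i) * ((1/(1+mu*e i)) * (g i - (u i/(1+mu*e i) * e i) * s)) = (1 + e i) * g i / (1 + mu) - (1 + e i) * u i * s / (1+mu)^2" if "i \<in> S" for i
  proof -
    have "e i = 1 \<or> e i = -1" using e that by auto
    then show ?thesis
    proof
      assume "e i = -1" then show ?thesis by simp
    next
      assume ei: "e i = 1" show ?thesis
      proof (cases "1 + mu = 0")
        case True then show ?thesis using ei by simp
      next
        case False
        have h: "1 + mu * e i = 1 + mu" "1 + e i = 2" using ei by simp_all
        have "(1 + e i) * ((1/(1+mu*e i)) * (g i - (u i/(1+mu*e i) * e i) * s)) = 2 * ((1/(1+mu)) * (g i - (u i/(1+mu)) * s))"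
          by (simp add: h ei)
        also have "\<dots> = 2*g i/(1+mu) - 2*u i * s/(1+mu)^2" using False by (rule aux_d2)
        finally show ?thesis by (simp add: h)
      qed
    qed
  qed
  have a1: "(\<Sum>i\<in>S. (1 - e i) * g i) = - s" using sg by (simp add: s_def algebra_simps sum_subtractf mult.commute)
  have a2: "(\<Sum>i\<in>S. (1 - e i) * u i) = 1 - mu" using su by (simp add: mu_def algebra_simps sum_subtractf mult.commute)
  have a3: "(\<Sum>i\<in>S. (1 + e i) * g i) = s" using sg by (simp add: s_def algebra_simps sum.distrib mult.commute)
  have a4: "(\<Sum>i\<in>S. (1 + e i) * u i) = 1 + mu" using su by (simp add: mu_def algebra_simps sum.distrib mult.commute)
  have "(\<Sum>i\<in>S. (1 - e i) * ((1/(1+mu*e i)) * (g i - (u i/(1+mu*e i) * e i) * s)))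
     = (\<Sum>i\<in>S. (1 - e i) * g i) / (1 - mu) + (\<Sum>i\<in>S. (1 - e i) * u i) * s / (1-mu)^2"
  proof -
    have "(\<Sum>i\<in>S. (1 - e i) * ((1/(1+mu*e i)) * (g i - (u i/(1+mu*e i) * e i) * s))) = (\<Sum>i\<in>S. (1 - e i) * g i / (1 - mu) + (1 - e i) * u i * s / (1-mu)^2)"
      by (intro sum.cong refl t1)
    then show ?thesis by (simp add: sum.distrib sum_divide_distrib sum_distrib_right)
  qed
  also have "\<dots> = 0" unfolding a1 a2 by (rule aux_z1)
  finally show "(\<Sum>i\<in>S. (1 - e i) * ((1/(1+mu*e i)) * (g i - (u i/(1+mu*e i) * e i) * s))) = 0" .
  have "(\<Sum>i\<in>S. (1 + e i) * ((1/(1+mu*e i)) * (g i - (u i/(1+mu*e i) * e i) * s)))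
     = (\<Sum>i\<in>S. (1 + e i) * g i) / (1 + mu) - (\<Sum>i\<in>S. (1 + e i) * u i) * s / (1+mu)^2"
  proof -
    have "(\<Sum>i\<in>S. (1 + e i) * ((1/(1+mu*e i)) * (g i - (u i/(1+mu*e i) * e i) * s))) = (\<Sum>i\<in>S. (1 + e i) * g i / (1 + mu) - (1 + e i) * u i * s / (1+mu)^2)"
      by (intro sum.cong refl t2)
    then show ?thesis by (simp add: sum_subtractf sum_divide_distrib sum_distrib_right)
  qed
  also have "\<dots> = 0" unfolding a3 a4 by (rule aux_z2)
  finally show "(\<Sum>i\<in>S. (1 + e i) * ((1/(1+mu*e i)) * (g i - (u i/(1+mu*e i) * e i) * s))) = 0" .
qed

lemma inv_u:
  fixes u e :: "nat \<Rightarrow> real"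
  assumes fin: "finite S" and e: "\<forall>i\<in>S. e i = 1 \<or> e i = -1" and su: "(\<Sum>i\<in>S. u i) = 1"
    and n1: "1 + (\<Sum>i\<in>S. u i * e i) \<noteq> 0" and n2: "1 - (\<Sum>i\<in>S. u i * e i) \<noteq> 0"
  shows "(\<Sum>i\<in>S. u i / (1 + (\<Sum>i\<in>S. u i * e i) * e i)) = 1"
proof -
  define mu where "mu = (\<Sum>i\<in>S. u i * e i)"
  have t: "u i / (1 + mu * e i) = ((1 + e i) * u i) / (2*(1 + mu)) + ((1 - e i) * u i) / (2*(1 - mu))" if "i \<in> S" for i
  proof -
    have "e i = 1 \<or> e i = -1" using e that by auto
    moreover have nz12: "1 + mu \<noteq> 0" "1 - mu \<noteq> 0" using n1 n2 by (auto simp: mu_def)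
    moreover have nz3: "mu * mu \<noteq> 1"
    proof
      assume "mu * mu = 1" moreover have "(1+mu)*(1-mu) = 1 - mu*mu" by algebra
      ultimately have "(1+mu)*(1-mu) = 0" by simp
      then show False using \<open>1 + mu \<noteq> 0\<close> \<open>1 - mu \<noteq> 0\<close> by simp
    qed
    ultimately show ?thesis by (elim disjE) (auto simp: field_simps)
  qed
  have a2: "(\<Sum>i\<in>S. (1 - e i) * u i) = 1 - mu" using su by (simp add: mu_def algebra_simps sum_subtractf mult.commute)
  have a4: "(\<Sum>i\<in>S. (1 + e i) * u i) = 1 + mu" using su by (simp add: mu_def algebra_simps sum.distrib mult.commute)
  have "(\<Sum>i\<in>S. u i / (1 + mu * e i)) = (\<Sum>i\<in>S. (1 + e i) * u i) / (2*(1 + mu)) + (\<Sum>i\<in>S. (1 - e i) * u i) / (2*(1 - mu))"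
  proof -
    have "(\<Sum>i\<in>S. u i / (1 + mu * e i)) = (\<Sum>i\<in>S. ((1 + e i) * u i) / (2*(1 + mu)) + ((1 - e i) * u i) / (2*(1 - mu)))"
      by (intro sum.cong refl t)
    then show ?thesis by (simp add: sum.distrib sum_divide_distrib)
  qed
  also have "\<dots> = 1"
  proof -
    have "1 + mu \<noteq> 0" "1 - mu \<noteq> 0" using n1 n2 by (auto simp: mu_def)
    then show ?thesis unfolding a2 a4 by (rule aux_h)
  qed
  finally show ?thesis by (simp add: mu_def)
qed

lemma step_perm:
  assumes bij: "bij_betw \<sigma> {1..m} {1..m}" and Lp: "\<forall>i\<in>{1..m}. L (\<sigma> i) j' = L i j"
    and w: "\<forall>i\<in>{1..m}. w i = u (\<sigma> i)"
  shows "\<forall>i\<in>{1..m}. ada_step L m j w i = ada_step L m j' u (\<sigma> i)"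
proof -
  have "(\<Sum>i\<in>{1..m}. w i * L i j) = (\<Sum>i\<in>{1..m}. u (\<sigma> i) * L (\<sigma> i) j')"
    using Lp w by (intro sum.cong) auto
  also have "\<dots> = (\<Sum>k\<in>{1..m}. u k * L k j')"
    using sum.reindex_bij_betw[OF bij, of "\<lambda>k. u k * L k j'"] by simp
  finally have mu: "(\<Sum>i\<in>{1..m}. w i * L i j) = (\<Sum>k\<in>{1..m}. u k * L k j')" .
  show ?thesis unfolding ada_step_def Let_def mu using Lp w by auto
qed

lemma run_perm:
  assumes bij: "bij_betw \<sigma> {1..m} {1..m}"
  shows "\<forall>u w. (\<forall>j\<in>set cs. \<forall>i\<in>{1..m}. L (\<sigma> i) (\<tau> j) = L i j) \<longrightarrow> (\<forall>i\<in>{1..m}. w i = u (\<sigma> i)) \<longrightarrow>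
     (\<forall>i\<in>{1..m}. ada_run L m cs w i = ada_run L m (map \<tau> cs) u (\<sigma> i))"
proof (induction cs)
  case Nil then show ?case by (simp add: ada_run_def)
next
  case (Cons j cs)
  show ?case
  proof (intro allI impI)
    fix u w :: "nat \<Rightarrow> real"
    assume Lp: "\<forall>j'\<in>set (j # cs). \<forall>i\<in>{1..m}. L (\<sigma> i) (\<tau> j') = L i j'" and w: "\<forall>i\<in>{1..m}. w i = u (\<sigma> i)"
    have s: "\<forall>i\<in>{1..m}. ada_step L m j w i = ada_step L m (\<tau> j) u (\<sigma> i)"
    proof -
      have Lj: "\<forall>i\<in>{1..m}. L (\<sigma> i) (\<tau> j) = L i j" using Lp by simp
      show ?thesis using step_perm[OF bij Lj w] .
    qed
    have "\<forall>i\<in>{1..m}. ada_run L m cs (ada_step L m j w) i = ada_run L m (map \<tau> cs) (ada_step L m (\<tau> j) u) (\<sigma> i)"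
      using Cons.IH Lp s by auto
    then show "\<forall>i\<in>{1..m}. ada_run L m (j # cs) w i = ada_run L m (map \<tau> (j # cs)) u (\<sigma> i)"
      by (simp add: ada_run_def)
  qed
qed

lemma abs3: "\<bar>a+b+c::real\<bar> \<le> \<bar>a\<bar>+\<bar>b\<bar>+\<bar>c\<bar>" by arith
definition bl :: "real \<Rightarrow> real \<Rightarrow> real \<Rightarrow> bool" where "bl x c r \<longleftrightarrow> \<bar>x - c\<bar> \<le> r"

definition div_cond :: "real \<Rightarrow> real \<Rightarrow> real \<Rightarrow> real \<Rightarrow> real \<Rightarrow> real \<Rightarrow> bool" where
  "div_cond c1 r1 c2 r2 c r \<longleftrightarrow> r2 < \<bar>c2\<bar> \<and> \<bar>c1 - c*c2\<bar> + r1 + \<bar>c\<bar>*r2 \<le> r*(\<bar>c2\<bar> - r2)"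

lemma bl_div:
  assumes x: "bl x c1 r1" and y: "bl y c2 r2" and d: "div_cond c1 r1 c2 r2 c r"
  shows "bl (x/y) c r" "y \<noteq> 0"
proof -
  have r2: "r2 < \<bar>c2\<bar>" and ineq: "\<bar>c1 - c*c2\<bar> + r1 + \<bar>c\<bar>*r2 \<le> r*(\<bar>c2\<bar> - r2)" using d by (auto simp: div_cond_def)
  have x': "\<bar>x - c1\<bar> \<le> r1" and y': "\<bar>y - c2\<bar> \<le> r2" using x y by (auto simp: bl_def)
  have ay: "\<bar>y\<bar> \<ge> \<bar>c2\<bar> - r2" using y' by arith
  then show yn: "y \<noteq> 0" using r2 by auto
  have r1: "r1 \<ge> 0" using x' by arith
  have r2p: "r2 \<ge> 0" using y' by arith
  have "0 \<le> \<bar>c\<bar>*r2" using r2p by simp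
  then have "0 \<le> r*(\<bar>c2\<bar> - r2)" using ineq r1 by (smt (verit) abs_ge_zero)
  then have rp: "r \<ge> 0" using r2 by (simp add: zero_le_mult_iff)
  have "x - c*y = (x - c1) + (c1 - c*c2) + c*(c2 - y)" by algebra
  then have "\<bar>x - c*y\<bar> \<le> \<bar>x - c1\<bar> + \<bar>c1 - c*c2\<bar> + \<bar>c*(c2 - y)\<bar>" using abs3 by metis
  also have "\<bar>c*(c2 - y)\<bar> = \<bar>c\<bar>*\<bar>y - c2\<bar>" by (simp add: abs_mult abs_minus_commute)
  also have "\<bar>c\<bar>*\<bar>y - c2\<bar> \<le> \<bar>c\<bar>*r2" using y' by (simp add: mult_left_mono)
  finally have "\<bar>x - c*y\<bar> \<le> \<bar>x - c1\<bar> + \<bar>c1 - c*c2\<bar> + \<bar>c\<bar>*r2" by simp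
  also have "\<dots> \<le> r*(\<bar>c2\<bar> - r2)" using ineq x' by simp
  also have "\<dots> \<le> r*\<bar>y\<bar>" using ay rp by (simp add: mult_left_mono)
  finally have "\<bar>x - c*y\<bar> \<le> r*\<bar>y\<bar>" .
  moreover have "x/y - c = (x - c*y)/y" using yn by (simp add: field_simps)
  moreover have "\<bar>y\<bar> > 0" using yn by simp
  ultimately show "bl (x/y) c r" by (simp add: bl_def abs_divide divide_le_eq)
qed
lemma bl_sum:
  assumes "finite S" "\<forall>i\<in>S. bl (x i) (c i) (r i)"
  shows "bl (\<Sum>i\<in>S. x i * w i) (\<Sum>i\<in>S. c i * w i) (\<Sum>i\<in>S. r i * \<bar>w i\<bar>)"
proof -
  have "\<bar>(\<Sum>i\<in>S. x i * w i) - (\<Sum>i\<in>S. c i * w i)\<bar> = \<bar>\<Sum>i\<in>S. (x i - c i) * w i\<bar>"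
    by (simp add: sum_subtractf left_diff_distrib)
  also have "\<dots> \<le> (\<Sum>i\<in>S. \<bar>(x i - c i) * w i\<bar>)" by (rule sum_abs)
  also have "\<dots> \<le> (\<Sum>i\<in>S. r i * \<bar>w i\<bar>)"
    using assms(2) by (intro sum_mono) (auto simp: bl_def abs_mult intro!: mult_right_mono)
  finally show ?thesis by (simp add: bl_def)
qed

lemma bl_mul:
  assumes x: "bl x c1 r1" and y: "bl y c2 r2"
  shows "bl (x*y) (c1*c2) (\<bar>c1\<bar>*r2 + \<bar>c2\<bar>*r1 + r1*r2)"
proof -
  have "x*y - c1*c2 = c1*(y - c2) + c2*(x - c1) + (x - c1)*(y - c2)" by algebra
  then have "\<bar>x*y - c1*c2\<bar> \<le> \<bar>c1\<bar>*\<bar>y - c2\<bar> + \<bar>c2\<bar>*\<bar>x - c1\<bar> + \<bar>x - c1\<bar>*\<bar>y - c2\<bar>"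
    using abs3 by (metis abs_mult)
  also have "\<dots> \<le> \<bar>c1\<bar>*r2 + \<bar>c2\<bar>*r1 + r1*r2"
    using x y by (intro add_mono mult_mono mult_left_mono) (auto simp: bl_def)
  finally show ?thesis by (simp add: bl_def)
qed

definition step_cond :: "(nat\<Rightarrow>nat\<Rightarrow>real) \<Rightarrow> nat \<Rightarrow> nat \<Rightarrow> (nat\<Rightarrow>real) \<Rightarrow> (nat\<Rightarrow>real) \<Rightarrow> (nat \<Rightarrow> real^'n) \<Rightarrow> (nat \<Rightarrow> real^'n)
   \<Rightarrow> (nat\<Rightarrow>real) \<Rightarrow> (nat\<Rightarrow>real) \<Rightarrow> (nat \<Rightarrow> real^'n) \<Rightarrow> (nat \<Rightarrow> real^'n) \<Rightarrow> bool" where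
 "step_cond L m j cu ru cg rg cu' ru' cg' rg' \<longleftrightarrow>
   (\<forall>i\<in>{1..m}. div_cond (cu i) (ru i) (1 + (\<Sum>l\<in>{1..m}. cu l * L l j) * L i j) ((\<Sum>l\<in>{1..m}. ru l * \<bar>L l j\<bar>) * \<bar>L i j\<bar>) (cu' i) (ru' i)
  \<and> (\<forall>k. div_cond (cg i $ k - cu' i * L i j * (\<Sum>l\<in>{1..m}. cg l $ k * L l j))
       (rg i $ k + \<bar>L i j\<bar> * (\<bar>cu' i\<bar> * (\<Sum>l\<in>{1..m}. rg l $ k * \<bar>L l j\<bar>) + \<bar>\<Sum>l\<in>{1..m}. cg l $ k * L l j\<bar> * ru' i + ru' i * (\<Sum>l\<in>{1..m}. rg l $ k * \<bar>L l j\<bar>)))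
       (1 + (\<Sum>l\<in>{1..m}. cu l * L l j) * L i j) ((\<Sum>l\<in>{1..m}. ru l * \<bar>L l j\<bar>) * \<bar>L i j\<bar>) (cg' i $ k) (rg' i $ k)))"

lemma step_ball:
  fixes G :: "nat \<Rightarrow> real^'n"
  assumes U: "\<forall>i\<in>{1..m}. bl (u i) (cu i) (ru i)" and GG: "\<forall>i\<in>{1..m}. \<forall>k. bl (G i $ k) (cg i $ k) (rg i $ k)"
    and C: "step_cond L m j cu ru cg rg cu' ru' cg' rg'"
  shows "\<forall>i\<in>{1..m}. bl (fst (adg_step L m j (u,G)) i) (cu' i) (ru' i)"
    "\<forall>i\<in>{1..m}. \<forall>k. bl (snd (adg_step L m j (u,G)) i $ k) (cg' i $ k) (rg' i $ k)"
    "\<forall>i\<in>{1..m}. 1 + (\<Sum>l\<in>{1..m}. u l * L l j) * L i j \<noteq> 0"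
proof -
  define mu where "mu = (\<Sum>l\<in>{1..m}. u l * L l j)"
  define cm where "cm = (\<Sum>l\<in>{1..m}. cu l * L l j)"
  define rm where "rm = (\<Sum>l\<in>{1..m}. ru l * \<bar>L l j\<bar>)"
  have bmu: "bl mu cm rm" unfolding mu_def cm_def rm_def by (rule bl_sum) (use U in auto)
  have bden: "bl (1 + mu * L i j) (1 + cm * L i j) (rm * \<bar>L i j\<bar>)" for i
    using bmu by (simp add: bl_def abs_mult left_diff_distrib[symmetric] mult_right_mono)
  have dc: "div_cond (cu i) (ru i) (1 + cm * L i j) (rm * \<bar>L i j\<bar>) (cu' i) (ru' i)" if "i \<in> {1..m}" for i
    using C that by (simp add: step_cond_def cm_def rm_def)
  have bu': "bl (u i / (1 + mu * L i j)) (cu' i) (ru' i)" and nz: "1 + mu * L i j \<noteq> 0" if i: "i \<in> {1..m}" for i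
  proof -
    have "bl (u i) (cu i) (ru i)" using U i by auto
    from bl_div[OF this bden dc[OF i]] show "bl (u i / (1 + mu * L i j)) (cu' i) (ru' i)" "1 + mu * L i j \<noteq> 0" by auto
  qed
  show "\<forall>i\<in>{1..m}. bl (fst (adg_step L m j (u,G)) i) (cu' i) (ru' i)"
    using bu' by (simp add: adg_step_def ada_step_def Let_def mu_def)
  show "\<forall>i\<in>{1..m}. 1 + (\<Sum>l\<in>{1..m}. u l * L l j) * L i j \<noteq> 0" using nz by (simp add: mu_def)
  show "\<forall>i\<in>{1..m}. \<forall>k. bl (snd (adg_step L m j (u,G)) i $ k) (cg' i $ k) (rg' i $ k)"
  proof (intro ballI allI)
    fix i k assume i: "i \<in> {1..m}"
    define cs where "cs = (\<Sum>l\<in>{1..m}. cg l $ k * L l j)"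
    define rs where "rs = (\<Sum>l\<in>{1..m}. rg l $ k * \<bar>L l j\<bar>)"
    define sk where "sk = (\<Sum>l\<in>{1..m}. G l $ k * L l j)"
    have bs: "bl sk cs rs" unfolding sk_def cs_def rs_def by (rule bl_sum) (use GG in auto)
    have bp: "bl (u i / (1 + mu * L i j) * sk) (cu' i * cs) (\<bar>cu' i\<bar> * rs + \<bar>cs\<bar> * ru' i + ru' i * rs)"
      using bl_mul[OF bu'[OF i] bs] .
    have bp2: "bl (u i / (1 + mu * L i j) * L i j * sk) (cu' i * L i j * cs) (\<bar>L i j\<bar> * (\<bar>cu' i\<bar> * rs + \<bar>cs\<bar> * ru' i + ru' i * rs))"
    proof -
      have "u i / (1 + mu * L i j) * L i j * sk - cu' i * L i j * cs = L i j * (u i / (1 + mu * L i j) * sk - cu' i * cs)" by algebra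
      then show ?thesis using bp by (simp add: bl_def abs_mult mult_left_mono)
    qed
    have bn: "bl (G i $ k - u i / (1 + mu * L i j) * L i j * sk) (cg i $ k - cu' i * L i j * cs)
           (rg i $ k + \<bar>L i j\<bar> * (\<bar>cu' i\<bar> * rs + \<bar>cs\<bar> * ru' i + ru' i * rs))"
    proof -
      have "\<bar>G i $ k - cg i $ k\<bar> \<le> rg i $ k" using GG i by (auto simp: bl_def)
      then show ?thesis using bp2 unfolding bl_def by arith
    qed
    have dc2: "div_cond (cg i $ k - cu' i * L i j * cs) (rg i $ k + \<bar>L i j\<bar> * (\<bar>cu' i\<bar> * rs + \<bar>cs\<bar> * ru' i + ru' i * rs))
       (1 + cm * L i j) (rm * \<bar>L i j\<bar>) (cg' i $ k) (rg' i $ k)"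
      using C i by (simp add: step_cond_def cm_def rm_def cs_def rs_def)
    have res: "bl ((G i $ k - u i / (1 + mu * L i j) * L i j * sk) / (1 + mu * L i j)) (cg' i $ k) (rg' i $ k)"
      using bl_div(1)[OF bn bden dc2] .
    have "snd (adg_step L m j (u,G)) i $ k = (G i $ k - u i / (1 + mu * L i j) * L i j * sk) / (1 + mu * L i j)"
      by (simp add: adg_step_def Let_def mu_def sk_def algebra_simps sum_distrib_left diff_divide_distrib mult.commute)
    then show "bl (snd (adg_step L m j (u,G)) i $ k) (cg' i $ k) (rg' i $ k)" using res by simp
  qed
qed

lemma snd_adg_comp: "snd (adg_step L m j st) i $ k =
   (1/(1 + (\<Sum>i\<in>{1..m}. fst st i * L i j) * L i j)) * (snd st i $ k - (fst st i/(1 + (\<Sum>i\<in>{1..m}. fst st i * L i j) * L i j) * L i j) * (\<Sum>l\<in>{1..m}. L l j * snd st l $ k))"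
  by (simp add: adg_step_def Let_def)

lemma inv_step:
  fixes st :: "(nat \<Rightarrow> real) \<times> (nat \<Rightarrow> real^'n)"
  assumes su: "(\<Sum>i\<in>{1..m}. fst st i) = 1" and sg: "\<forall>k. (\<Sum>i\<in>{1..m}. snd st i $ k) = 0"
    and e: "\<forall>i\<in>{1..m}. L i j = 1 \<or> L i j = -1" and ep: "\<exists>i\<in>{1..m}. L i j = 1" and en: "\<exists>i\<in>{1..m}. L i j = -1"
    and nz: "\<forall>i\<in>{1..m}. 1 + (\<Sum>l\<in>{1..m}. fst st l * L l j) * L i j \<noteq> 0"
  shows "(\<Sum>i\<in>{1..m}. fst (adg_step L m j st) i) = 1"
    "\<forall>k. (\<Sum>i\<in>{1..m}. snd (adg_step L m j st) i $ k) = 0"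
    "\<forall>k. (\<Sum>i\<in>{1..m}. (1 - L i j) * snd (adg_step L m j st) i $ k) = 0"
proof -
  define mu where "mu = (\<Sum>i\<in>{1..m}. fst st i * L i j)"
  have n1: "1 + mu \<noteq> 0" using ep nz by (force simp: mu_def)
  have n2: "1 - mu \<noteq> 0" using en nz by (force simp: mu_def)
  show "(\<Sum>i\<in>{1..m}. fst (adg_step L m j st) i) = 1"
    using inv_u[of "{1..m}" "\<lambda>i. L i j" "fst st"] e su n1 n2
    by (simp add: fst_adg_step ada_step_def Let_def mu_def)
  have A: "(\<Sum>i\<in>{1..m}. (1 - L i j) * snd (adg_step L m j st) i $ k) = 0"
   and B: "(\<Sum>i\<in>{1..m}. (1 + L i j) * snd (adg_step L m j st) i $ k) = 0" for k
    using inv_scalar[of "{1..m}" "\<lambda>i. L i j" "fst st" "\<lambda>i. snd st i $ k"] e su sg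
    by (simp_all add: snd_adg_comp)
  show "\<forall>k. (\<Sum>i\<in>{1..m}. (1 - L i j) * snd (adg_step L m j st) i $ k) = 0" using A by simp
  show "\<forall>k. (\<Sum>i\<in>{1..m}. snd (adg_step L m j st) i $ k) = 0"
  proof
    fix k
    have "2 * (\<Sum>i\<in>{1..m}. snd (adg_step L m j st) i $ k) = (\<Sum>i\<in>{1..m}. (1 - L i j) * snd (adg_step L m j st) i $ k) + (\<Sum>i\<in>{1..m}. (1 + L i j) * snd (adg_step L m j st) i $ k)"
      by (simp add: sum_distrib_left sum.distrib[symmetric] algebra_simps)
    then show "(\<Sum>i\<in>{1..m}. snd (adg_step L m j st) i $ k) = 0" using A[of k] B[of k] by simp
  qed
qed

lemma hd_vec2:
  assumes "(f1 has_derivative f1') F" "(f2 has_derivative f2') F"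
  shows "((\<lambda>x. vector [f1 x, f2 x] :: real^2) has_derivative (\<lambda>h. vector [f1' h, f2' h])) F"
proof -
  have e: "\<And>a b. (vector [a, b] :: real^2) = a *\<^sub>R axis 1 1 + b *\<^sub>R axis 2 1"
    by (auto simp: vec_eq_iff forall_2 axis_def)
  show ?thesis unfolding e
    by (intro has_derivative_add has_derivative_scaleR_left assms)
qed

lemma hd_vec3:
  assumes "(f1 has_derivative f1') F" "(f2 has_derivative f2') F" "(f3 has_derivative f3') F"
  shows "((\<lambda>x. vector [f1 x, f2 x, f3 x] :: real^3) has_derivative (\<lambda>h. vector [f1' h, f2' h, f3' h])) F"
proof -
  have e: "\<And>a b c. (vector [a, b, c] :: real^3) = a *\<^sub>R axis 1 1 + b *\<^sub>R axis 2 1 + c *\<^sub>R axis 3 1"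
    by (auto simp: vec_eq_iff forall_3 axis_def)
  show ?thesis unfolding e
    by (intro has_derivative_add has_derivative_scaleR_left assms)
qed

lemma hd_nth: "((\<lambda>x::real^'n. x$k) has_derivative (\<lambda>h. h$k)) F"
  by (rule bounded_linear_imp_has_derivative[OF bounded_linear_vec_nth])

lemma inner_vec2: "(vector [a, b] :: real^2) \<bullet> h = a * h$1 + b * h$2"
  by (simp add: inner_vec_def sum_2)
lemma inner_vec3: "(vector [a, b, c] :: real^3) \<bullet> h = a * h$1 + b * h$2 + c * h$3"
  by (simp add: inner_vec_def sum_3)

lemma hd_aff2: "((\<lambda>x::real^2. c + a * x$1 + b * x$2) has_derivative (\<lambda>h. vector [a, b] \<bullet> h)) F"
proof -
  have "((\<lambda>x::real^2. c + a * x$1 + b * x$2) has_derivative (\<lambda>h. 0 + a * h$1 + b * h$2)) F"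
    by (intro has_derivative_add has_derivative_const has_derivative_mult_right hd_nth)
  then show ?thesis unfolding inner_vec2 by simp
qed
lemma hd_aff3: "((\<lambda>x::real^3. c + a * x$1 + b * x$2 + d * x$3) has_derivative (\<lambda>h. vector [a, b, d] \<bullet> h)) F"
proof -
  have "((\<lambda>x::real^3. c + a * x$1 + b * x$2 + d * x$3) has_derivative (\<lambda>h. 0 + a * h$1 + b * h$2 + d * h$3)) F"
    by (intro has_derivative_add has_derivative_const has_derivative_mult_right hd_nth)
  then show ?thesis unfolding inner_vec3 by simp
qed

lemma bl_shift: "bl x c r \<Longrightarrow> c + k = c' \<Longrightarrow> bl (x + k) c' r" by (auto simp: bl_def)
lemma bl_refl: "bl x c r \<Longrightarrow> k - c = c' \<Longrightarrow> bl (k - x) c' r" by (auto simp: bl_def)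
lemma bl_neg: "bl x c r \<Longrightarrow> bl (-x) (-c) r" by (auto simp: bl_def)
lemma bl_lo: "bl x c r \<Longrightarrow> c - r \<le> x" by (auto simp: bl_def)
lemma bl_hi: "bl x c r \<Longrightarrow> x \<le> c + r" by (auto simp: bl_def)



lemma core2a:
  fixes a b c d mu x1 x2 l1 l2 :: real
  assumes e1: "(a*a + b*c) * x1 + (a*b + b*d) * x2 = mu * x1"
    and e2: "(c*a + d*c) * x1 + (c*b + d*d) * x2 = mu * x2"
    and nz: "x1 \<noteq> 0 \<or> x2 \<noteq> 0"
    and s: "l1 + l2 = a + d" and p: "l1 * l2 = a*d - b*c"
  shows "mu = l1^2 \<or> mu = l2^2"
proof -
  define P where "P = (a*a + b*c - mu) * (c*b + d*d - mu) - (a*b + b*d) * (c*a + d*c)"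
  have "P * x1 = (c*b + d*d - mu) * ((a*a + b*c) * x1 + (a*b + b*d) * x2 - mu * x1) - (a*b + b*d) * ((c*a + d*c) * x1 + (c*b + d*d) * x2 - mu * x2)"
    unfolding P_def by algebra
  then have "P * x1 = 0" using e1 e2 by simp
  have "P * x2 = (a*a + b*c - mu) * ((c*a + d*c) * x1 + (c*b + d*d) * x2 - mu * x2) - (c*a + d*c) * ((a*a + b*c) * x1 + (a*b + b*d) * x2 - mu * x1)"
    unfolding P_def by algebra
  then have "P * x2 = 0" using e1 e2 by simp
  have P0: "P = 0" using \<open>P * x1 = 0\<close> \<open>P * x2 = 0\<close> nz by auto
  have "P = mu^2 - ((a+d)^2 - 2*(a*d - b*c)) * mu + (a*d - b*c)^2" unfolding P_def by algebra
  also have "\<dots> = mu^2 - ((l1+l2)^2 - 2*(l1*l2)) * mu + (l1*l2)^2" by (simp add: s p)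
  also have "\<dots> = (mu - l1^2) * (mu - l2^2)" by algebra
  finally show ?thesis using P0 by simp
qed

lemma core2b:
  fixes a b c d s x1 x2 l1 l2 :: real
  assumes e1: "(a - s) * x1 + b * x2 = 0" and e2: "c * x1 + (d - s) * x2 = 0"
    and sm: "l1 + l2 = a + d" and p: "l1 * l2 = a*d - b*c"
    and nz: "(s - l1) * (s - l2) \<noteq> 0"
  shows "x1 = 0 \<and> x2 = 0"
proof -
  have D: "(a - s) * (d - s) - b * c = (s - l1) * (s - l2)"
  proof -
    have "(a - s) * (d - s) - b * c = s^2 - (a+d) * s + (a*d - b*c)" by algebra
    also have "\<dots> = s^2 - (l1+l2) * s + l1*l2" by (simp add: sm p)
    also have "\<dots> = (s - l1) * (s - l2)" by algebra
    finally show ?thesis .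
  qed
  have "((a - s) * (d - s) - b * c) * x1 = (d - s) * ((a - s) * x1 + b * x2) - b * (c * x1 + (d - s) * x2)" by algebra
  then have "((s - l1) * (s - l2)) * x1 = 0" using e1 e2 D by simp
  moreover have "((a - s) * (d - s) - b * c) * x2 = (a - s) * (c * x1 + (d - s) * x2) - c * ((a - s) * x1 + b * x2)" by algebra
  then have "((s - l1) * (s - l2)) * x2 = 0" using e1 e2 D by simp
  ultimately show ?thesis using nz by simp
qed

lemma complex_eig_of_real:
  fixes R :: "real^'n^'n"
  assumes "R *v v = l *s v" "v \<noteq> 0"
  shows "complex_eigenvalue R (complex_of_real l)"
  unfolding complex_eigenvalue_def
proof (intro exI conjI)
  show "(\<chi> i. complex_of_real (v $ i)) \<noteq> 0" using assms(2) by (auto simp: vec_eq_iff)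
  have "\<forall>i. (\<Sum>j\<in>UNIV. R $ i $ j * v $ j) = l * v $ i"
    using assms(1) by (auto simp: vec_eq_iff matrix_vector_mult_def)
  then show "(\<chi> i j. complex_of_real (R $ i $ j)) *v (\<chi> i. complex_of_real (v $ i)) = complex_of_real l *s (\<chi> i. complex_of_real (v $ i))"
    by (auto simp: vec_eq_iff matrix_vector_mult_def simp flip: of_real_mult of_real_sum)
qed

lemma mv2: "(M *v (v::real^2)) = (vector [M$1$1 * v$1 + M$1$2 * v$2, M$2$1 * v$1 + M$2$2 * v$2] :: real^2)"
  by (auto simp: vec_eq_iff forall_2 matrix_vector_mult_def sum_2)
lemma mm2: "((M::real^2^2) ** N) = (vector [vector [M$1$1 * N$1$1 + M$1$2 * N$2$1, M$1$1 * N$1$2 + M$1$2 * N$2$2],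
    vector [M$2$1 * N$1$1 + M$2$2 * N$2$1, M$2$1 * N$1$2 + M$2$2 * N$2$2]] :: real^2^2)"
  by (auto simp: vec_eq_iff forall_2 matrix_matrix_mult_def sum_2)
lemma vec2_eq: "(v::real^2) = w \<longleftrightarrow> v$1 = w$1 \<and> v$2 = w$2"
  by (auto simp: vec_eq_iff forall_2)

lemma eig2:
  fixes M :: "real^2^2"
  assumes s: "l1 + l2 = M$1$1 + M$2$2" and p: "l1 * l2 = M$1$1*M$2$2 - M$1$2*M$2$1"
    and pos: "l1 > 0" "l1 > l2" "l1 > -l2" and bnz: "M$1$2 \<noteq> 0"
    and dom: "dominant_eigenvalue (M**M) mu" and ev: "(M**M) *v v = mu *s v" and v: "v \<noteq> 0"
  shows "mu > 0 \<and> M *v v = sqrt mu *s v"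
proof -
  define a where "a = M$1$1" define b where "b = M$1$2" define c where "c = M$2$1" define d where "d = M$2$2"
  define v1 where "v1 = v$1" define v2 where "v2 = v$2"
  have e1: "(a*a + b*c) * v1 + (a*b + b*d) * v2 = mu * v1" and e2: "(c*a + d*c) * v1 + (c*b + d*d) * v2 = mu * v2"
    using ev by (auto simp: mv2 mm2 vec2_eq a_def b_def c_def d_def v1_def v2_def algebra_simps)
  have vnz: "v1 \<noteq> 0 \<or> v2 \<noteq> 0" using v by (auto simp: vec2_eq v1_def v2_def)
  have s': "l1 + l2 = a + d" and p': "l1 * l2 = a*d - b*c" using s p by (auto simp: a_def b_def c_def d_def)
  have mus: "mu = l1^2 \<or> mu = l2^2" by (rule core2a[OF e1 e2 vnz s' p'])
  define w :: "real^2" where "w = vector [b, l1 - a]"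
  have "l1*l1 - (l1 + l2)*l1 + l1*l2 = 0" by algebra
  then have ch: "c * b + d * (l1 - a) = l1 * (l1 - a)" unfolding s' p' by algebra
  have Mw: "M *v w = l1 *s w" using ch by (auto simp: mv2 vec2_eq w_def a_def b_def c_def d_def algebra_simps)
  have MMw: "(M**M) *v w = (l1^2) *s w"
    by (simp add: matrix_vector_mul_assoc[symmetric] Mw vector_scalar_commute power2_eq_square)
  have wnz: "w \<noteq> 0" using bnz by (auto simp: w_def vec2_eq b_def)
  have ce: "complex_eigenvalue (M**M) (complex_of_real (l1^2))" by (rule complex_eig_of_real[OF MMw wnz])
  have gt: "l1^2 > l2^2"
  proof -
    have "l1^2 - l2^2 = (l1 - l2) * (l1 + l2)" by algebra
    moreover have "(l1 - l2) * (l1 + l2) > 0" using pos by simp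
    ultimately show ?thesis by simp
  qed
  have mu1: "mu = l1^2"
  proof (rule ccontr)
    assume "mu \<noteq> l1^2"
    then have "complex_of_real (l1^2) \<noteq> complex_of_real mu" by (metis of_real_eq_iff)
    then have "cmod (complex_of_real (l1^2)) < \<bar>mu\<bar>" using dom ce unfolding dominant_eigenvalue_def by blast
    moreover have "cmod (complex_of_real (l1^2)) = l1^2" by (metis abs_power2 norm_of_real)
    moreover have "mu = l2^2" using mus \<open>mu \<noteq> l1^2\<close> by simp
    ultimately show False using gt by (simp only:) simp
  qed
  have sq: "sqrt mu = l1" using mu1 pos by simp
  define w1 where "w1 = a * v1 + b * v2 - l1 * v1"
  define w2 where "w2 = c * v1 + d * v2 - l1 * v2"
  have f1: "(a - (-l1)) * w1 + b * w2 = 0"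
  proof -
    have "(a - (-l1)) * w1 + b * w2 = ((a*a + b*c) * v1 + (a*b + b*d) * v2) - l1^2 * v1" unfolding w1_def w2_def by algebra
    then show ?thesis using e1 mu1 by simp
  qed
  have f2: "c * w1 + (d - (-l1)) * w2 = 0"
  proof -
    have "c * w1 + (d - (-l1)) * w2 = ((c*a + d*c) * v1 + (c*b + d*d) * v2) - l1^2 * v2" unfolding w1_def w2_def by algebra
    then show ?thesis using e2 mu1 by simp
  qed
  have "(-l1 - l1) * (-l1 - l2) \<noteq> 0" using pos by simp
  then have "w1 = 0 \<and> w2 = 0" using core2b[OF f1 f2 s' p'] by blast
  then have "M *v v = l1 *s v" by (auto simp: mv2 vec2_eq w1_def w2_def a_def b_def c_def d_def v1_def v2_def)
  then show ?thesis using sq mu1 pos by simp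
qed

lemma mv3: "(M *v (v::real^3)) = (vector [M$1$1 * v$1 + M$1$2 * v$2 + M$1$3 * v$3, M$2$1 * v$1 + M$2$2 * v$2 + M$2$3 * v$3,
   M$3$1 * v$1 + M$3$2 * v$2 + M$3$3 * v$3] :: real^3)"
  by (auto simp: vec_eq_iff forall_3 matrix_vector_mult_def sum_3)
lemma vec3_eq: "(v::real^3) = w \<longleftrightarrow> v$1 = w$1 \<and> v$2 = w$2 \<and> v$3 = w$3"
  by (auto simp: vec_eq_iff forall_3)
lemma mm3: "((M::real^3^3) ** N) $ i $ j = M$i$1 * N$1$j + M$i$2 * N$2$j + M$i$3 * N$3$j"
  by (simp add: matrix_matrix_mult_def sum_3)

lemma eig3:
  fixes M :: "real^3^3"
  assumes z1: "M$3$1 = 0" and z2: "M$3$2 = 0"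
    and s: "l1 + l2 = M$1$1 + M$2$2" and p: "l1 * l2 = M$1$1*M$2$2 - M$1$2*M$2$1"
    and pos: "M$3$3 > l1" "M$3$3 > -l1" "M$3$3 > l2" "M$3$3 > -l2"
    and dom: "dominant_eigenvalue (M**M) mu" and ev: "(M**M) *v v = mu *s v" and v: "v \<noteq> 0"
  shows "mu > 0 \<and> M *v v = sqrt mu *s v"
proof -
  define a where "a = M$1$1" define b where "b = M$1$2" define c where "c = M$2$1" define d where "d = M$2$2"
  define f1 where "f1 = M$1$3" define f2 where "f2 = M$2$3" define g where "g = M$3$3"
  define v1 where "v1 = v$1" define v2 where "v2 = v$2" define v3 where "v3 = v$3"
  note defs = a_def b_def c_def d_def f1_def f2_def g_def v1_def v2_def v3_def
  have gp: "g > 0" using pos by (simp add: g_def)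
  have E1: "(a*a + b*c) * v1 + (a*b + b*d) * v2 + (a*f1 + b*f2 + f1*g) * v3 = mu * v1"
   and E2: "(c*a + d*c) * v1 + (c*b + d*d) * v2 + (c*f1 + d*f2 + f2*g) * v3 = mu * v2"
   and E3: "g*g * v3 = mu * v3"
    using ev z1 z2 by (auto simp: mv3 mm3 vec3_eq defs algebra_simps)
  have s': "l1 + l2 = a + d" and p': "l1 * l2 = a*d - b*c" using s p by (auto simp: defs)
  have gl: "g^2 > l1^2" "g^2 > l2^2"
  proof -
    have "g^2 - l1^2 = (g - l1) * (g + l1)" "g^2 - l2^2 = (g - l2) * (g + l2)" by algebra+
    moreover have "(g - l1) * (g + l1) > 0" "(g - l2) * (g + l2) > 0" using pos by (simp_all add: g_def)
    ultimately show "g^2 > l1^2" "g^2 > l2^2" by simp_all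
  qed
  define D where "D = (a-g)*(d-g) - b*c"
  have DD: "D = (g - l1) * (g - l2)"
  proof -
    have "D = g^2 - (a+d)*g + (a*d - b*c)" unfolding D_def by algebra
    also have "\<dots> = g^2 - (l1+l2)*g + l1*l2" by (simp add: s' p')
    also have "\<dots> = (g - l1) * (g - l2)" by algebra
    finally show ?thesis .
  qed
  have Dnz: "D \<noteq> 0" unfolding DD using pos by (simp add: g_def)
  define w :: "real^3" where "w = vector [-((d-g)*f1 - b*f2), -(-c*f1 + (a-g)*f2), D]"
  have r1: "a * (-((d-g)*f1 - b*f2)) + b * (-(-c*f1 + (a-g)*f2)) + f1 * D = g * (-((d-g)*f1 - b*f2))"
    unfolding D_def by algebra
  have r2: "c * (-((d-g)*f1 - b*f2)) + d * (-(-c*f1 + (a-g)*f2)) + f2 * D = g * (-(-c*f1 + (a-g)*f2))"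
    unfolding D_def by algebra
  have Mw: "M *v w = g *s w" using r1 r2 z1 z2 by (simp add: mv3 vec3_eq w_def defs)
  have MMw: "(M**M) *v w = (g^2) *s w"
    by (simp add: matrix_vector_mul_assoc[symmetric] Mw vector_scalar_commute power2_eq_square)
  have wnz: "w \<noteq> 0" using Dnz by (auto simp: w_def vec3_eq)
  have ce: "complex_eigenvalue (M**M) (complex_of_real (g^2))" by (rule complex_eig_of_real[OF MMw wnz])
  have mu1: "mu = g^2"
  proof (rule ccontr)
    assume ne: "mu \<noteq> g^2"
    then have v30: "v3 = 0" using E3 by (auto simp: power2_eq_square)
    have e1: "(a*a + b*c) * v1 + (a*b + b*d) * v2 = mu * v1" using E1 v30 by simp
    have e2: "(c*a + d*c) * v1 + (c*b + d*d) * v2 = mu * v2" using E2 v30 by simp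
    have vnz: "v1 \<noteq> 0 \<or> v2 \<noteq> 0" using v v30 by (auto simp: vec3_eq defs)
    have mus: "mu = l1^2 \<or> mu = l2^2" by (rule core2a[OF e1 e2 vnz s' p'])
    have "complex_of_real (g^2) \<noteq> complex_of_real mu" using ne by (metis of_real_eq_iff)
    then have "cmod (complex_of_real (g^2)) < \<bar>mu\<bar>" using dom ce unfolding dominant_eigenvalue_def by blast
    moreover have "cmod (complex_of_real (g^2)) = g^2" by (metis abs_power2 norm_of_real)
    moreover have "\<bar>mu\<bar> = mu" using mus by auto
    ultimately show False using mus gl by auto
  qed
  have sq: "sqrt mu = g" using mu1 gp by simp
  define w1 where "w1 = a * v1 + b * v2 + f1 * v3 - g * v1"
  define w2 where "w2 = c * v1 + d * v2 + f2 * v3 - g * v2"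
  have f1': "(a - (-g)) * w1 + b * w2 = 0"
  proof -
    have "(a - (-g)) * w1 + b * w2 = ((a*a + b*c) * v1 + (a*b + b*d) * v2 + (a*f1 + b*f2 + f1*g) * v3) - g^2 * v1"
      unfolding w1_def w2_def by algebra
    then show ?thesis using E1 mu1 by simp
  qed
  have f2': "c * w1 + (d - (-g)) * w2 = 0"
  proof -
    have "c * w1 + (d - (-g)) * w2 = ((c*a + d*c) * v1 + (c*b + d*d) * v2 + (c*f1 + d*f2 + f2*g) * v3) - g^2 * v2"
      unfolding w1_def w2_def by algebra
    then show ?thesis using E2 mu1 by simp
  qed
  have "(-g - l1) * (-g - l2) \<noteq> 0" using pos by (simp add: g_def)
  then have "w1 = 0 \<and> w2 = 0" using core2b[OF f1' f2' s' p'] by blast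
  then have "M *v v = g *s v" using z1 z2 by (auto simp: mv3 vec3_eq w1_def w2_def defs)
  then show ?thesis using sq mu1 gp by simp
qed


lemma eig2_num:
  fixes M :: "real^2^2"
  assumes tr: "M$1$1 + M$2$2 > 0" and b: "M$1$2 > 0" and c: "M$2$1 > 0"
    and dom: "dominant_eigenvalue (M**M) mu" and ev: "(M**M) *v v = mu *s v" and v: "v \<noteq> 0"
  shows "mu > 0 \<and> M *v v = sqrt mu *s v"
proof -
  define disc where "disc = (M$1$1 - M$2$2)^2 + 4 * M$1$2 * M$2$1"
  have dp: "disc > 0" unfolding disc_def using b c by (simp add: add_nonneg_pos)
  define q where "q = sqrt disc"
  have qp: "q > 0" using dp by (simp add: q_def)
  have qq: "q * q = disc" using dp by (simp add: q_def)
  define l1 where "l1 = (M$1$1 + M$2$2 + q) / 2"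
  define l2 where "l2 = (M$1$1 + M$2$2 - q) / 2"
  have s: "l1 + l2 = M$1$1 + M$2$2" by (simp add: l1_def l2_def field_simps)
  have "l1 * l2 = ((M$1$1 + M$2$2)^2 - q*q) / 4" by (simp add: l1_def l2_def field_simps power2_eq_square)
  also have "\<dots> = M$1$1*M$2$2 - M$1$2*M$2$1" unfolding qq disc_def by (simp add: field_simps power2_eq_square)
  finally have p: "l1 * l2 = M$1$1*M$2$2 - M$1$2*M$2$1" .
  obtain t where t: "t = M$1$1 + M$2$2" by blast
  have l1t: "l1 = (t + q)/2" and l2t: "l2 = (t - q)/2" by (simp_all add: l1_def l2_def t)
  have tp: "t > 0" using tr t by simp
  have h1: "l1 > 0" using tp qp unfolding l1t by simp
  have h2: "l1 > l2" using qp unfolding l1t l2t by (simp add: field_simps)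
  have h3: "l1 > -l2" using tp unfolding l1t l2t by (simp add: field_simps)
  show ?thesis
    by (rule eig2[OF s p h1 h2 h3 _ dom ev v]) (use b in simp)
qed

lemma eig3_num:
  fixes M :: "real^3^3"
  assumes z1: "M$3$1 = 0" and z2: "M$3$2 = 0"
    and tr: "M$1$1 + M$2$2 > 0" and b: "M$1$2 > 0" and c: "M$2$1 > 0"
    and X: "0 \<le> M$1$1 - M$2$2" "M$1$1 - M$2$2 \<le> x" and Y: "M$1$2 \<le> y" and Z: "M$2$1 \<le> z"
    and K: "x^2 + 4*y*z \<le> k^2" "0 \<le> k" and G: "2 * M$3$3 - (M$1$1 + M$2$2) > k" "2 * M$3$3 + (M$1$1 + M$2$2) > k"
    and dom: "dominant_eigenvalue (M**M) mu" and ev: "(M**M) *v v = mu *s v" and v: "v \<noteq> 0"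
  shows "mu > 0 \<and> M *v v = sqrt mu *s v"
proof -
  define disc where "disc = (M$1$1 - M$2$2)^2 + 4 * M$1$2 * M$2$1"
  have dp: "disc > 0" unfolding disc_def using b c by (simp add: add_nonneg_pos)
  define q where "q = sqrt disc"
  have qp: "q > 0" using dp by (simp add: q_def)
  have qq: "q * q = disc" using dp by (simp add: q_def)
  have "(M$1$1 - M$2$2)^2 \<le> x^2" using X by (simp add: power_mono)
  moreover have "M$1$2 * M$2$1 \<le> y * z" using b c Y Z by (simp add: mult_mono)
  ultimately have "disc \<le> k^2" using K unfolding disc_def by linarith
  then have "sqrt disc \<le> sqrt (k^2)" by (rule real_sqrt_le_mono)
  then have qk: "q \<le> k" unfolding q_def using K(2) by simp
  define l1 where "l1 = (M$1$1 + M$2$2 + q) / 2"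
  define l2 where "l2 = (M$1$1 + M$2$2 - q) / 2"
  have s: "l1 + l2 = M$1$1 + M$2$2" by (simp add: l1_def l2_def field_simps)
  have "l1 * l2 = ((M$1$1 + M$2$2)^2 - q*q) / 4" by (simp add: l1_def l2_def field_simps power2_eq_square)
  also have "\<dots> = M$1$1*M$2$2 - M$1$2*M$2$1" unfolding qq disc_def by (simp add: field_simps power2_eq_square)
  finally have p: "l1 * l2 = M$1$1*M$2$2 - M$1$2*M$2$1" .
  obtain t where t: "t = M$1$1 + M$2$2" by blast
  obtain g where g: "g = M$3$3" by blast
  have l1t: "l1 = (t + q)/2" and l2t: "l2 = (t - q)/2" by (simp_all add: l1_def l2_def t)
  have tp: "t > 0" using tr t by simp
  have G': "2 * g - t > k" "2 * g + t > k" using G t g by simp_all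
  have h1: "g > l1" using qk G' unfolding l1t by (simp add: field_simps)
  have h2: "g > -l1" using qk G' tp qp unfolding l1t by (simp add: field_simps)
  have h3: "g > l2" using qk G' qp unfolding l2t by (simp add: field_simps)
  have h4: "g > -l2" using qk G' unfolding l2t by (simp add: field_simps)
  show ?thesis using eig3[OF z1 z2 s p _ _ _ _ dom ev v] h1 h2 h3 h4 g by blast
qed



definition fpd :: "real \<Rightarrow> real" where
  "fpd x = 7168*x^6 - 18432*x^5 + 16000*x^4 - 4608*x^3 - 432*x^2 + 352*x - 40"

lemma fpoly_deriv: "DERIV fpoly x :> fpd x"
  unfolding fpoly_def fpd_def
  by (rule derivative_eq_intros refl | simp)+

lemma pow_bounds: "(a::real) \<le> x \<Longrightarrow> x \<le> b \<Longrightarrow> 0 \<le> a \<Longrightarrow> a^n \<le> x^n \<and> x^n \<le> b^n"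
  by (auto intro: power_mono)

lemma fpd_neg: assumes "63711/100000 \<le> x" "x \<le> 63712/100000" shows "fpd x < 0"
proof -
  have z: "(0::real) \<le> 63711/100000" by simp
  note h = pow_bounds[OF assms z, of 6] pow_bounds[OF assms z, of 5] pow_bounds[OF assms z, of 4]
           pow_bounds[OF assms z, of 3] pow_bounds[OF assms z, of 2]
  have "fpd x \<le> 7168*(63712/100000)^6 - 18432*(63711/100000)^5 + 16000*(63712/100000)^4 - 4608*(63711/100000)^3 - 432*(63711/100000)^2 + 352*(63712/100000) - 40"
    unfolding fpd_def using h assms by linarith
  also have "\<dots> < 0" by (simp add: power_divide)
  finally show ?thesis .
qed

lemma p_star_facts: "0.637116837818846 \<le> p_star \<and> p_star \<le> 0.637116837818848 \<and> fpoly p_star = 0"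
proof -
  have ex: "\<exists>p. 0.637116837818846 \<le> p \<and> p \<le> 0.637116837818848 \<and> fpoly p = 0"
  proof (rule IVT2')
    show "fpoly 0.637116837818848 \<le> 0" by (simp add: fpoly_def power_divide)
    show "0 \<le> fpoly 0.637116837818846" by (simp add: fpoly_def power_divide)
    show "continuous_on {0.637116837818846..0.637116837818848} fpoly"
      unfolding fpoly_def by (intro continuous_intros)
  qed simp
  have dec: "fpoly q < fpoly p" if "63711/100000 \<le> p" "p < q" "q \<le> 63712/100000" for p q
    using DERIV_neg_imp_decreasing[OF that(2), of fpoly] fpoly_deriv fpd_neg that by force
  have uniq: "p = q" if "0.637116837818846 \<le> p" "p \<le> 0.637116837818848" "fpoly p = 0"
     "0.637116837818846 \<le> q" "q \<le> 0.637116837818848" "fpoly q = 0" for p q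
  proof (rule ccontr)
    have c1: "(63711/100000::real) \<le> 0.637116837818846" and c2: "(0.637116837818848::real) \<le> 63712/100000" by simp_all
    have l: "63711/100000 \<le> p" "p \<le> 63712/100000" "63711/100000 \<le> q" "q \<le> 63712/100000"
      using order_trans[OF c1 that(1)] order_trans[OF that(2) c2] order_trans[OF c1 that(4)] order_trans[OF that(5) c2] by auto
    assume "p \<noteq> q"
    then have "p < q \<or> q < p" by auto
    then show False
    proof
      assume "p < q" then have "fpoly q < fpoly p" using dec[of p q] l by simp
      then show False using that by simp
    next
      assume "q < p" then have "fpoly p < fpoly q" using dec[of q p] l by simp
      then show False using that by simp
    qed
  qed
  have "\<exists>!p. p \<in> {0.637116837818846..0.637116837818848} \<and> fpoly p = 0"
    using ex uniq by auto
  from theI'[OF this] show ?thesis unfolding p_star_def by simp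
qed

lemma bl_p: "bl p_star 0.637116837818847 0.000000000000001"
proof -
  have e: "(0.637116837818847::real) - 0.000000000000001 = 0.637116837818846" "(0.637116837818847::real) + 0.000000000000001 = 0.637116837818848" by simp_all
  show ?thesis using p_star_facts unfolding bl_def abs_le_iff by (simp only: e[symmetric]) linarith
qed

lemma bl_d: "bl d_star 0.257995382955952158 0.0000000000025"
proof -
  define a :: real where "a = 637116837818846/1000000000000000"
  define b :: real where "b = 637116837818848/1000000000000000"
  have ab: "a \<le> p_star" "p_star \<le> b" using p_star_facts by (simp_all add: a_def b_def)
  have z: "0 \<le> a" by (simp add: a_def)
  note h = pow_bounds[OF ab z, of 6] pow_bounds[OF ab z, of 5] pow_bounds[OF ab z, of 4]
           pow_bounds[OF ab z, of 3] pow_bounds[OF ab z, of 2]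
  have lo: "d_star \<ge> 512*a^6 - 1152*b^5 + 736*a^4 - 24*b^3 - 88*b^2 + 19*a - 9/2"
    unfolding d_star_def using h ab by linarith
  have hi: "d_star \<le> 512*b^6 - 1152*a^5 + 736*b^4 - 24*a^3 - 88*a^2 + 19*b - 9/2"
    unfolding d_star_def using h ab by linarith
  have n1: "0.257995382955952158 - 0.0000000000025 \<le> 512*a^6 - 1152*b^5 + 736*a^4 - 24*b^3 - 88*b^2 + 19*a - 9/2"
    by (simp add: a_def b_def power_divide)
  have n2: "512*b^6 - 1152*a^5 + 736*b^4 - 24*a^3 - 88*a^2 + 19*b - 9/2 \<le> 0.257995382955952158 + 0.0000000000025"
    by (simp add: a_def b_def power_divide)
  show ?thesis using lo hi n1 n2 unfolding bl_def by linarith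
qed

lemma LA_vals: "LA 1 1 = 1" "LA (Suc 0) (Suc 0) = 1" "LA 1 2 = 1" "LA (Suc 0) (2) = 1" "LA 1 3 = -1" "LA (Suc 0) (3) = -1" "LA 1 4 = -1" "LA (Suc 0) (4) = -1" "LA 2 1 = -1" "LA (2) (Suc 0) = -1" "LA 2 2 = 1" "LA 2 3 = 1" "LA 2 4 = 1" "LA 3 1 = 1" "LA (3) (Suc 0) = 1" "LA 3 2 = -1" "LA 3 3 = -1" "LA 3 4 = 1" "LA 4 1 = 1" "LA (4) (Suc 0) = 1" "LA 4 2 = -1" "LA 4 3 = 1" "LA 4 4 = -1"
  by (simp_all add: LA_def)

lemma ivl4: "{1..4::nat} = {1,2,3,4}" by auto


lemma LB_vals: "LB 1 1 = 1" "LB (Suc 0) (Suc 0) = 1" "LB 1 2 = 1" "LB (Suc 0) (2) = 1" "LB 1 3 = -1" "LB (Suc 0) (3) = -1" "LB 1 4 = -1" "LB (Suc 0) (4) = -1" "LB 2 1 = -1" "LB (2) (Suc 0) = -1" "LB 2 2 = 1" "LB 2 3 = 1" "LB 2 4 = 1" "LB 3 1 = 1" "LB (3) (Suc 0) = 1" "LB 3 2 = -1" "LB 3 3 = -1" "LB 3 4 = 1" "LB 4 1 = 1" "LB (4) (Suc 0) = 1" "LB 4 2 = -1" "LB 4 3 = 1" "LB 4 4 = -1" "LB 5 1 = 1" "LB (5) (Suc 0) = 1" "LB 5 2 = -1" "LB 5 3 = 1" "LB 5 4 = 1"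
  by (simp_all add: LB_def)

lemma ivl5: "{1..5::nat} = {1,2,3,4,5}" by auto




definition cuA0 :: "nat \<Rightarrow> real" where "cuA0 = (\<lambda>i. if i = 1 then 0.137116837818847 else if i = 2 then 0.362883162181153 else if i = 3 then 0.242004617044047842 else 0.257995382955952158)"
definition ruA0 :: "nat \<Rightarrow> real" where "ruA0 = (\<lambda>i. if i = 1 then 0.000000000000001 else if i = 2 then 0.000000000000001 else if i = 3 then 0.0000000000025 else 0.0000000000025)"
definition cgA0 :: "nat \<Rightarrow> real^2" where "cgA0 = (\<lambda>i. if i = 1 then vector [1, 0] else if i = 2 then vector [-1, 0] else if i = 3 then vector [0, -1] else vector [0, 1])"
definition rgA0 :: "nat \<Rightarrow> real^2" where "rgA0 = (\<lambda>i. 0)"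
definition cuA1 :: "nat \<Rightarrow> real" where "cuA1 = (\<lambda>i. if i = 1 then 0.107607294046931 else if i = 2 then 0.5 else if i = 3 then 0.1899216930701003 else 0.2024710128829687)"
definition ruA1 :: "nat \<Rightarrow> real" where "ruA1 = (\<lambda>i. if i = 1 then 0.00000000000043 else if i = 2 then 0.0000000000035 else if i = 3 then 0.0000000000028 else 0.0000000000028)"
definition cgA1 :: "nat \<Rightarrow> real^2" where "cgA1 = (\<lambda>i. if i = 1 then vector [0.6158881427406867, 0] else if i = 2 then vector [0, 0] else if i = 3 then vector [-0.2980955482518596, -0.7847854119061381] else vector [-0.3177925944888272, 0.7847854119061381])"
definition rgA1 :: "nat \<Rightarrow> real^2" where "rgA1 = (\<lambda>i. if i = 1 then vector [0.0000000000031, 0] else if i = 2 then vector [0.0000000000097, 0] else if i = 3 then vector [0.0000000000056, 0.0000000000031] else vector [0.0000000000057, 0.0000000000031])"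
definition cuA2 :: "nat \<Rightarrow> real" where "cuA2 = (\<lambda>i. if i = 1 then 0.1808349752567206 else if i = 2 then 0.355886570997414 else if i = 3 then 0.3191650247432794 else 0.144113429002586)"
definition ruA2 :: "nat \<Rightarrow> real" where "ruA2 = (\<lambda>i. if i = 1 then 0.0000000000037 else if i = 2 then 0.000000000005 else if i = 3 then 0.0000000000099 else 0.000000000003)"
definition cgA2 :: "nat \<Rightarrow> real^2" where "cgA2 = (\<lambda>i. if i = 1 then vector [0.8418542940512346, 0.4769842828391698] else if i = 2 then vector [0.1610004038128794, -0.3975887746112578] else if i = 3 then vector [-0.8418542940512347, -0.4769842828391698] else vector [-0.1610004038128795, 0.3975887746112578])"
definition rgA2 :: "nat \<Rightarrow> real^2" where "rgA2 = (\<lambda>i. if i = 1 then vector [0.00000000003, 0.00000000002] else if i = 2 then vector [0.000000000017, 0.0000000000099] else if i = 3 then vector [0.000000000047, 0.000000000043] else vector [0.000000000009, 0.0000000000089])"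
definition cuA3 :: "nat \<Rightarrow> real" where "cuA3 = (\<lambda>i. if i = 1 then 0.2782518284232218 else if i = 2 then 0.2635995331637733 else if i = 3 then 0.2364004668362267 else 0.2217481715767782)"
definition ruA3 :: "nat \<Rightarrow> real" where "ruA3 = (\<lambda>i. if i = 1 then 0.000000000015 else if i = 2 then 0.000000000008 else if i = 3 then 0.000000000012 else 0.000000000012)"
definition cgA3 :: "nat \<Rightarrow> real^2" where "cgA3 = (\<lambda>i. if i = 1 then vector [0.7123540357287408, -0.0149544076597656] else if i = 2 then vector [0.3851157025127189, 0.0470225721355245] else if i = 3 then vector [-0.385115702512719, -0.0470225721355245] else vector [-0.7123540357287409, 0.0149544076597656])"
definition rgA3 :: "nat \<Rightarrow> real^2" where "rgA3 = (\<lambda>i. if i = 1 then vector [0.00000000015, 0.00000000011] else if i = 2 then vector [0.000000000047, 0.000000000035] else if i = 3 then vector [0.000000000072, 0.000000000063] else vector [0.000000000098, 0.000000000075])"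
definition cuA4 :: "nat \<Rightarrow> real" where "cuA4 = (\<lambda>i. if i = 1 then 0.188926977204853 else if i = 2 then 0.5 else if i = 3 then 0.160510807286602 else 0.150562215508545)"
definition ruA4 :: "nat \<Rightarrow> real" where "ruA4 = (\<lambda>i. if i = 1 then 0.000000000017 else if i = 2 then 0.00000000006 else if i = 3 then 0.000000000014 else 0.000000000013)"
definition cgA4 :: "nat \<Rightarrow> real^2" where "cgA4 = (\<lambda>i. if i = 1 then vector [0.5824762241895969, 0.0019101408098263] else if i = 2 then vector [-0.0000000000000002, 0] else if i = 3 then vector [-0.1775428246386119, -0.0216779534676028] else vector [-0.4049333995509851, 0.0197678126577766])"
definition rgA4 :: "nat \<Rightarrow> real^2" where "rgA4 = (\<lambda>i. if i = 1 then vector [0.00000000018, 0.00000000012] else if i = 2 then vector [0.00000000053, 0.00000000035] else if i = 3 then vector [0.00000000011, 0.000000000076] else vector [0.00000000013, 0.000000000082])"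
definition cuA5 :: "nat \<Rightarrow> real" where "cuA5 = (\<lambda>i. if i = 1 then 0.1371168378188472 else if i = 2 then 0.3628831621811528 else if i = 3 then 0.2579953829559567 else 0.2420046170440433)"
definition ruA5 :: "nat \<Rightarrow> real" where "ruA5 = (\<lambda>i. if i = 1 then 0.000000000023 else if i = 2 then 0.000000000072 else if i = 3 then 0.000000000066 else 0.000000000062)"
definition cgA5 :: "nat \<Rightarrow> real^2" where "cgA5 = (\<lambda>i. if i = 1 then vector [0.3068116376961208, 0.001006141376686] else if i = 2 then vector [-0.3068116376961209, -0.001006141376686] else if i = 3 then vector [0.1977180909182598, -0.0332596158005119] else vector [-0.19771809091826, 0.033259615800512])"
definition rgA5 :: "nat \<Rightarrow> real^2" where "rgA5 = (\<lambda>i. if i = 1 then vector [0.00000000027, 0.00000000015] else if i = 2 then vector [0.00000000072, 0.00000000043] else if i = 3 then vector [0.00000000073, 0.00000000039] else vector [0.00000000073, 0.00000000039])"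
definition stA0 :: "(nat \<Rightarrow> real) \<times> (nat \<Rightarrow> real^2)" where "stA0 = (chartA P0A, cgA0)"
definition stA1 :: "(nat \<Rightarrow> real) \<times> (nat \<Rightarrow> real^2)" where "stA1 = adg_step LA 4 1 stA0"
definition stA2 :: "(nat \<Rightarrow> real) \<times> (nat \<Rightarrow> real^2)" where "stA2 = adg_step LA 4 3 stA1"
definition stA3 :: "(nat \<Rightarrow> real) \<times> (nat \<Rightarrow> real^2)" where "stA3 = adg_step LA 4 4 stA2"
definition stA4 :: "(nat \<Rightarrow> real) \<times> (nat \<Rightarrow> real^2)" where "stA4 = adg_step LA 4 1 stA3"
definition stA5 :: "(nat \<Rightarrow> real) \<times> (nat \<Rightarrow> real^2)" where "stA5 = adg_step LA 4 2 stA4"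
lemma condA1: "step_cond LA 4 1 cuA0 ruA0 cgA0 rgA0 cuA1 ruA1 cgA1 rgA1"
  unfolding step_cond_def ivl4 by (simp add: div_cond_def LA_vals cuA0_def ruA0_def cgA0_def rgA0_def cuA1_def ruA1_def cgA1_def rgA1_def forall_2)
lemma condA2: "step_cond LA 4 3 cuA1 ruA1 cgA1 rgA1 cuA2 ruA2 cgA2 rgA2"
  unfolding step_cond_def ivl4 by (simp add: div_cond_def LA_vals cuA1_def ruA1_def cgA1_def rgA1_def cuA2_def ruA2_def cgA2_def rgA2_def forall_2)
lemma condA3: "step_cond LA 4 4 cuA2 ruA2 cgA2 rgA2 cuA3 ruA3 cgA3 rgA3"
  unfolding step_cond_def ivl4 by (simp add: div_cond_def LA_vals cuA2_def ruA2_def cgA2_def rgA2_def cuA3_def ruA3_def cgA3_def rgA3_def forall_2)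
lemma condA4: "step_cond LA 4 1 cuA3 ruA3 cgA3 rgA3 cuA4 ruA4 cgA4 rgA4"
  unfolding step_cond_def ivl4 by (simp add: div_cond_def LA_vals cuA3_def ruA3_def cgA3_def rgA3_def cuA4_def ruA4_def cgA4_def rgA4_def forall_2)
lemma condA5: "step_cond LA 4 2 cuA4 ruA4 cgA4 rgA4 cuA5 ruA5 cgA5 rgA5"
  unfolding step_cond_def ivl4 by (simp add: div_cond_def LA_vals cuA4_def ruA4_def cgA4_def rgA4_def cuA5_def ruA5_def cgA5_def rgA5_def forall_2)

lemma ballA0u: "\<forall>i\<in>{1..4}. bl (fst stA0 i) (cuA0 i) (ruA0 i)"
proof -
  have "bl (p_star + (-1/2)) 0.137116837818847 0.000000000000001" by (rule bl_shift[OF bl_p]) simp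
  moreover have "bl (1 - p_star) 0.362883162181153 0.000000000000001" by (rule bl_refl[OF bl_p]) simp
  moreover have "bl (1/2 - d_star) 0.242004617044047842 0.0000000000025" by (rule bl_refl[OF bl_d]) simp
  ultimately show ?thesis using bl_d unfolding ivl4 by (simp add: stA0_def chartA_def P0A_def cuA0_def ruA0_def)
qed

lemma ballA0g: "\<forall>i\<in>{1..4}. \<forall>k. bl (snd stA0 i $ k) (cgA0 i $ k) (rgA0 i $ k)"
  by (simp add: stA0_def rgA0_def bl_def)

lemma stepA1: "(\<forall>i\<in>{1..4}. bl (fst stA1 i) (cuA1 i) (ruA1 i)) \<and> (\<forall>i\<in>{1..4}. \<forall>k. bl (snd stA1 i $ k) (cgA1 i $ k) (rgA1 i $ k))
   \<and> (\<forall>i\<in>{1..4}. 1 + (\<Sum>l\<in>{1..4}. fst stA0 l * LA l 1) * LA i 1 \<noteq> 0)"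
  using step_ball[OF ballA0u ballA0g condA1] unfolding stA1_def prod.collapse by blast
lemma ballA1u: "\<forall>i\<in>{1..4}. bl (fst stA1 i) (cuA1 i) (ruA1 i)" using stepA1 by blast
lemma ballA1g: "\<forall>i\<in>{1..4}. \<forall>k. bl (snd stA1 i $ k) (cgA1 i $ k) (rgA1 i $ k)" using stepA1 by blast
lemma denA0: "\<forall>i\<in>{1..4}. 1 + (\<Sum>l\<in>{1..4}. fst stA0 l * LA l 1) * LA i 1 \<noteq> 0" using stepA1 by blast
lemma fstA1: "ada_step LA 4 1 (fst stA0) = fst stA1" by (simp add: stA1_def fst_adg_step)

lemma stepA2: "(\<forall>i\<in>{1..4}. bl (fst stA2 i) (cuA2 i) (ruA2 i)) \<and> (\<forall>i\<in>{1..4}. \<forall>k. bl (snd stA2 i $ k) (cgA2 i $ k) (rgA2 i $ k))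
   \<and> (\<forall>i\<in>{1..4}. 1 + (\<Sum>l\<in>{1..4}. fst stA1 l * LA l 3) * LA i 3 \<noteq> 0)"
  using step_ball[OF ballA1u ballA1g condA2] unfolding stA2_def prod.collapse by blast
lemma ballA2u: "\<forall>i\<in>{1..4}. bl (fst stA2 i) (cuA2 i) (ruA2 i)" using stepA2 by blast
lemma ballA2g: "\<forall>i\<in>{1..4}. \<forall>k. bl (snd stA2 i $ k) (cgA2 i $ k) (rgA2 i $ k)" using stepA2 by blast
lemma denA1: "\<forall>i\<in>{1..4}. 1 + (\<Sum>l\<in>{1..4}. fst stA1 l * LA l 3) * LA i 3 \<noteq> 0" using stepA2 by blast
lemma fstA2: "ada_step LA 4 3 (fst stA1) = fst stA2" by (simp add: stA2_def fst_adg_step)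

lemma stepA3: "(\<forall>i\<in>{1..4}. bl (fst stA3 i) (cuA3 i) (ruA3 i)) \<and> (\<forall>i\<in>{1..4}. \<forall>k. bl (snd stA3 i $ k) (cgA3 i $ k) (rgA3 i $ k))
   \<and> (\<forall>i\<in>{1..4}. 1 + (\<Sum>l\<in>{1..4}. fst stA2 l * LA l 4) * LA i 4 \<noteq> 0)"
  using step_ball[OF ballA2u ballA2g condA3] unfolding stA3_def prod.collapse by blast
lemma ballA3u: "\<forall>i\<in>{1..4}. bl (fst stA3 i) (cuA3 i) (ruA3 i)" using stepA3 by blast
lemma ballA3g: "\<forall>i\<in>{1..4}. \<forall>k. bl (snd stA3 i $ k) (cgA3 i $ k) (rgA3 i $ k)" using stepA3 by blast
lemma denA2: "\<forall>i\<in>{1..4}. 1 + (\<Sum>l\<in>{1..4}. fst stA2 l * LA l 4) * LA i 4 \<noteq> 0" using stepA3 by blast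
lemma fstA3: "ada_step LA 4 4 (fst stA2) = fst stA3" by (simp add: stA3_def fst_adg_step)

lemma stepA4: "(\<forall>i\<in>{1..4}. bl (fst stA4 i) (cuA4 i) (ruA4 i)) \<and> (\<forall>i\<in>{1..4}. \<forall>k. bl (snd stA4 i $ k) (cgA4 i $ k) (rgA4 i $ k))
   \<and> (\<forall>i\<in>{1..4}. 1 + (\<Sum>l\<in>{1..4}. fst stA3 l * LA l 1) * LA i 1 \<noteq> 0)"
  using step_ball[OF ballA3u ballA3g condA4] unfolding stA4_def prod.collapse by blast
lemma ballA4u: "\<forall>i\<in>{1..4}. bl (fst stA4 i) (cuA4 i) (ruA4 i)" using stepA4 by blast
lemma ballA4g: "\<forall>i\<in>{1..4}. \<forall>k. bl (snd stA4 i $ k) (cgA4 i $ k) (rgA4 i $ k)" using stepA4 by blast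
lemma denA3: "\<forall>i\<in>{1..4}. 1 + (\<Sum>l\<in>{1..4}. fst stA3 l * LA l 1) * LA i 1 \<noteq> 0" using stepA4 by blast
lemma fstA4: "ada_step LA 4 1 (fst stA3) = fst stA4" by (simp add: stA4_def fst_adg_step)

lemma stepA5: "(\<forall>i\<in>{1..4}. bl (fst stA5 i) (cuA5 i) (ruA5 i)) \<and> (\<forall>i\<in>{1..4}. \<forall>k. bl (snd stA5 i $ k) (cgA5 i $ k) (rgA5 i $ k))
   \<and> (\<forall>i\<in>{1..4}. 1 + (\<Sum>l\<in>{1..4}. fst stA4 l * LA l 2) * LA i 2 \<noteq> 0)"
  using step_ball[OF ballA4u ballA4g condA5] unfolding stA5_def prod.collapse by blast
lemma ballA5u: "\<forall>i\<in>{1..4}. bl (fst stA5 i) (cuA5 i) (ruA5 i)" using stepA5 by blast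
lemma ballA5g: "\<forall>i\<in>{1..4}. \<forall>k. bl (snd stA5 i $ k) (cgA5 i $ k) (rgA5 i $ k)" using stepA5 by blast
lemma denA4: "\<forall>i\<in>{1..4}. 1 + (\<Sum>l\<in>{1..4}. fst stA4 l * LA l 2) * LA i 2 \<noteq> 0" using stepA5 by blast
lemma fstA5: "ada_step LA 4 2 (fst stA4) = fst stA5" by (simp add: stA5_def fst_adg_step)





lemma okA: "okrun LA 4 [1,3,4,1,2] (chartA P0A)"
proof -
  have c: "chartA P0A = fst stA0" by (simp add: stA0_def)
  show ?thesis unfolding c using denA0 denA1 denA2 denA3 denA4
    by (simp only: okrun.simps fstA1 fstA2 fstA3 fstA4 fstA5 simp_thms)
qed

lemma chartA_deriv: "\<forall>i\<in>{1..4}. ((\<lambda>x. chartA x i) has_derivative (\<lambda>h. cgA0 i \<bullet> h)) (at P0A)"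
proof -
  have e1: "(\<lambda>x. chartA x 1) = (\<lambda>x. -1/2 + 1 * x$1 + 0 * x$2)" by (auto simp: chartA_def)
  have e2: "(\<lambda>x. chartA x 2) = (\<lambda>x. 1 + (-1) * x$1 + 0 * x$2)" by (auto simp: chartA_def)
  have e3: "(\<lambda>x. chartA x 3) = (\<lambda>x. 1/2 + 0 * x$1 + (-1) * x$2)" by (auto simp: chartA_def)
  have e4: "(\<lambda>x. chartA x 4) = (\<lambda>x. 0 + 0 * x$1 + 1 * x$2)" by (auto simp: chartA_def)
  have "((\<lambda>x. chartA x 1) has_derivative (\<lambda>h. vector [1, 0] \<bullet> h)) (at P0A)" unfolding e1 by (rule hd_aff2)
  moreover have "((\<lambda>x. chartA x 2) has_derivative (\<lambda>h. vector [-1, 0] \<bullet> h)) (at P0A)" unfolding e2 by (rule hd_aff2)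
  moreover have "((\<lambda>x. chartA x 3) has_derivative (\<lambda>h. vector [0, -1] \<bullet> h)) (at P0A)" unfolding e3 by (rule hd_aff2)
  moreover have "((\<lambda>x. chartA x 4) has_derivative (\<lambda>h. vector [0, 1] \<bullet> h)) (at P0A)" unfolding e4 by (rule hd_aff2)
  ultimately show ?thesis unfolding ivl4 by (simp add: cgA0_def)
qed

lemma runA_eq: "adg_run LA 4 [1,3,4,1,2] (chartA P0A, cgA0) = stA5"
  by (simp add: adg_run_def stA5_def stA4_def stA3_def stA2_def stA1_def stA0_def)

lemma runA_deriv: "\<forall>i\<in>{1..4}. ((\<lambda>x. ada_run LA 4 [1,3,4,1,2] (chartA x) i) has_derivative (\<lambda>h. snd stA5 i \<bullet> h)) (at P0A)"
proof -
  note X = spec[OF spec[OF run_deriv[of 4 P0A LA "[1,3,4,1,2]"], of chartA], of cgA0]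
  show ?thesis using mp[OF mp[OF X chartA_deriv] okA] unfolding runA_eq .
qed

lemma hd_one_minus: "(f has_derivative f') F \<Longrightarrow> ((\<lambda>x. 1 - f x) has_derivative (\<lambda>h. - f' h)) F"
  using has_derivative_diff[OF has_derivative_const[of 1]] by fastforce

lemma F0A_deriv: "(F0A has_derivative (\<lambda>h. vector [- (snd stA5 2 \<bullet> h), snd stA5 4 \<bullet> h])) (at P0A)"
proof -
  have e: "F0A = (\<lambda>x. vector [1 - ada_run LA 4 [1,3,4,1,2] (chartA x) 2, ada_run LA 4 [1,3,4,1,2] (chartA x) 4])"
    by (rule ext) (simp add: F0A_def unchartA_def)
  have d2: "((\<lambda>x. ada_run LA 4 [1,3,4,1,2] (chartA x) 2) has_derivative (\<lambda>h. snd stA5 2 \<bullet> h)) (at P0A)"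
    using runA_deriv by (simp add: ivl4)
  have d4: "((\<lambda>x. ada_run LA 4 [1,3,4,1,2] (chartA x) 4) has_derivative (\<lambda>h. snd stA5 4 \<bullet> h)) (at P0A)"
    using runA_deriv by (simp add: ivl4)
  show ?thesis unfolding e by (intro hd_vec2 hd_one_minus d2 d4)
qed

lemma J0A_ent: "J0A $ 1 $ k = - (snd stA5 2 $ k)" "J0A $ 2 $ k = snd stA5 4 $ k"
  unfolding J0A_def jacobian_def frechet_derivative_at[OF F0A_deriv, symmetric] matrix_def
  by (simp_all add: inner_axis)

definition swp :: "nat \<Rightarrow> nat" where "swp i = (if i = 3 then 4 else if i = 4 then 3 else i)"

lemma swp_bij4: "bij_betw swp {1..4} {1..4}"
  unfolding ivl4 bij_betw_def inj_on_def by (auto simp: swp_def)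

definition SA :: "real^2 \<Rightarrow> real^2" where "SA x = vector [x$1, 1/2 - x$2]"

lemma F1A_eq: "F1A x = vector [1 - ada_run LA 4 [1,3,4,1,2] (chartA (SA x)) 2, ada_run LA 4 [1,3,4,1,2] (chartA (SA x)) 3]"
proof -
  have L: "\<forall>j\<in>set [1,4,3,1,2]. \<forall>i\<in>{1..4}. LA (swp i) (swp j) = LA i j"
    unfolding ivl4 by (simp add: swp_def LA_vals)
  have C: "\<forall>i\<in>{1..4}. chartA x i = chartA (SA x) (swp i)"
    unfolding ivl4 by (simp add: swp_def chartA_def SA_def)
  have P: "\<forall>i\<in>{1..4}. ada_run LA 4 [1,4,3,1,2] (chartA x) i = ada_run LA 4 (map swp [1,4,3,1,2]) (chartA (SA x)) (swp i)"
    using run_perm[OF swp_bij4, where cs="[1,4,3,1,2]" and L=LA and \<tau>=swp] L C by blast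
  have m: "map swp [1,4,3,1,2] = [1,3,4,1,2]" by (simp add: swp_def)
  have "ada_run LA 4 [1,4,3,1,2] (chartA x) 2 = ada_run LA 4 [1,3,4,1,2] (chartA (SA x)) 2"
    using P m by (simp add: ivl4 swp_def)
  moreover have "ada_run LA 4 [1,4,3,1,2] (chartA x) 4 = ada_run LA 4 [1,3,4,1,2] (chartA (SA x)) 3"
    using P m by (simp add: ivl4 swp_def)
  ultimately show ?thesis by (simp add: F1A_def unchartA_def)
qed

lemma SA_deriv: "(SA has_derivative (\<lambda>h. vector [h$1, - (h$2)])) (at x)"
proof -
  have "((\<lambda>x::real^2. 1/2 - x$2) has_derivative (\<lambda>h. 0 - h$2)) (at x)"
    by (intro has_derivative_diff has_derivative_const hd_nth)
  then show ?thesis unfolding SA_def[abs_def] by (intro hd_vec2 hd_nth) simp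
qed

lemma SA_P1A: "SA P1A = P0A" by (simp add: SA_def P1A_def P0A_def vec2_eq)

lemma F1A_deriv: "(F1A has_derivative (\<lambda>h. vector [- (snd stA5 2 \<bullet> vector [h$1, - (h$2)]), snd stA5 3 \<bullet> vector [h$1, - (h$2)]])) (at P1A)"
proof -
  have d: "((\<lambda>x. ada_run LA 4 [1,3,4,1,2] (chartA (SA x)) i) has_derivative (\<lambda>h. snd stA5 i \<bullet> vector [h$1, - (h$2)])) (at P1A)"
    if "i \<in> {1..4}" for i
  proof -
    have "((\<lambda>y. ada_run LA 4 [1,3,4,1,2] (chartA y) i) has_derivative (\<lambda>h. snd stA5 i \<bullet> h)) (at (SA P1A))"
      using runA_deriv that SA_P1A by simp
    from has_derivative_compose[OF SA_deriv this] show ?thesis .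
  qed
  have e: "F1A = (\<lambda>x. vector [1 - ada_run LA 4 [1,3,4,1,2] (chartA (SA x)) 2, ada_run LA 4 [1,3,4,1,2] (chartA (SA x)) 3])"
    by (rule ext) (rule F1A_eq)
  show ?thesis unfolding e by (intro hd_vec2 hd_one_minus d) auto
qed

lemma J1A_ent: "J1A $ 1 $ k = - (snd stA5 2 \<bullet> vector [axis k 1 $ 1, - (axis k 1 $ 2)])"
   "J1A $ 2 $ k = snd stA5 3 \<bullet> vector [axis k 1 $ 1, - (axis k 1 $ 2)]"
  unfolding J1A_def jacobian_def frechet_derivative_at[OF F1A_deriv, symmetric] matrix_def
  by simp_all

lemma colsA: "\<forall>j\<in>{1,3,4}. (\<forall>i\<in>{1..4}. LA i j = 1 \<or> LA i j = -1) \<and> (\<exists>i\<in>{1..4}. LA i j = 1) \<and> (\<exists>i\<in>{1..4}. LA i j = -1)"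
  unfolding ivl4 by (simp add: LA_vals)

lemma invA: "\<forall>k. snd stA5 3 $ k = - (snd stA5 4 $ k)"
proof -
  have s0: "(\<Sum>i\<in>{1..4}. fst stA0 i) = 1" "\<forall>k. (\<Sum>i\<in>{1..4}. snd stA0 i $ k) = 0"
    unfolding ivl4 by (simp_all add: stA0_def chartA_def cgA0_def forall_2)
  have c1: "\<forall>i\<in>{1..4}. LA i 1 = 1 \<or> LA i 1 = -1" "\<exists>i\<in>{1..4}. LA i 1 = 1" "\<exists>i\<in>{1..4}. LA i 1 = -1"
    unfolding ivl4 by (simp_all add: LA_vals)
  have c2: "\<forall>i\<in>{1..4}. LA i 2 = 1 \<or> LA i 2 = -1" "\<exists>i\<in>{1..4}. LA i 2 = 1" "\<exists>i\<in>{1..4}. LA i 2 = -1"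
    unfolding ivl4 by (simp_all add: LA_vals)
  have c3: "\<forall>i\<in>{1..4}. LA i 3 = 1 \<or> LA i 3 = -1" "\<exists>i\<in>{1..4}. LA i 3 = 1" "\<exists>i\<in>{1..4}. LA i 3 = -1"
    unfolding ivl4 by (simp_all add: LA_vals)
  have c4: "\<forall>i\<in>{1..4}. LA i 4 = 1 \<or> LA i 4 = -1" "\<exists>i\<in>{1..4}. LA i 4 = 1" "\<exists>i\<in>{1..4}. LA i 4 = -1"
    unfolding ivl4 by (simp_all add: LA_vals)
  note i1 = inv_step[where st=stA0 and m=4 and L=LA and j=1, OF s0 c1 denA0, folded stA1_def]
  note i2 = inv_step[where st=stA1 and m=4 and L=LA and j=3, OF i1(1,2) c3 denA1, folded stA2_def]
  note i3 = inv_step[where st=stA2 and m=4 and L=LA and j=4, OF i2(1,2) c4 denA2, folded stA3_def]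
  note i4 = inv_step[where st=stA3 and m=4 and L=LA and j=1, OF i3(1,2) c1 denA3, folded stA4_def]
  note i5 = inv_step[where st=stA4 and m=4 and L=LA and j=2, OF i4(1,2) c2 denA4, folded stA5_def]
  have h: "\<forall>k. 2 * snd stA5 3 $ k + 2 * snd stA5 4 $ k = 0" using i5(3) unfolding ivl4 by (simp add: LA_vals)
  show ?thesis
  proof
    fix k show "snd stA5 3 $ k = - (snd stA5 4 $ k)" using h[rule_format, of k] by linarith
  qed
qed

lemma inner_vec2r: "h \<bullet> (vector [a, b] :: real^2) = h$1 * a + h$2 * b"
  by (simp add: inner_vec_def sum_2)

lemma J1A_eq: "J1A = DSA ** J0A ** DSA"
  by (simp add: vec_eq_iff forall_2 matrix_matrix_mult_def sum_2 DSA_def J1A_ent J0A_ent inner_vec2r invA axis_def)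


lemma DSA_sq: "DSA ** DSA = mat 1"
  by (simp add: vec_eq_iff forall_2 matrix_matrix_mult_def sum_2 DSA_def mat_def)

lemma numA: "-307/1000 \<le> snd stA5 2 $ 1 \<and> snd stA5 2 $ 1 \<le> -306/1000 \<and> -11/10000 \<le> snd stA5 2 $ 2 \<and> snd stA5 2 $ 2 \<le> -9/10000
  \<and> -198/1000 \<le> snd stA5 4 $ 1 \<and> snd stA5 4 $ 1 \<le> -197/1000 \<and> 33/1000 \<le> snd stA5 4 $ 2 \<and> snd stA5 4 $ 2 \<le> 34/1000"
proof -
  have N: "\<bar>snd stA5 2 $ 1 - cgA5 2 $ 1\<bar> \<le> rgA5 2 $ 1" "\<bar>snd stA5 2 $ 2 - cgA5 2 $ 2\<bar> \<le> rgA5 2 $ 2"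
    "\<bar>snd stA5 4 $ 1 - cgA5 4 $ 1\<bar> \<le> rgA5 4 $ 1" "\<bar>snd stA5 4 $ 2 - cgA5 4 $ 2\<bar> \<le> rgA5 4 $ 2"
    using ballA5g unfolding bl_def ivl4 by simp_all
  then show ?thesis unfolding cgA5_def rgA5_def abs_le_iff by (simp; linarith?)
qed

lemma mainA: "\<forall>mu (v0 :: real^2).
            dominant_eigenvalue (J1A ** J0A) mu \<and> (J1A ** J0A) *v v0 = mu *s v0 \<and> v0$1 = 1 \<longrightarrow>
            mu > 0 \<and> J0A *v v0 = sqrt mu *s (DSA *v v0) \<and> J1A *v (DSA *v v0) = sqrt mu *s v0"
proof (intro allI impI)
  fix mu and v0 :: "real^2"
  assume H: "dominant_eigenvalue (J1A ** J0A) mu \<and> (J1A ** J0A) *v v0 = mu *s v0 \<and> v0$1 = 1"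
  define M where "M = DSA ** J0A"
  have R: "J1A ** J0A = M ** M" by (simp add: J1A_eq M_def matrix_mul_assoc)
  have v: "v0 \<noteq> 0" using H by auto
  have Me: "M$1$1 = - (snd stA5 2 $ 1)" "M$1$2 = - (snd stA5 2 $ 2)" "M$2$1 = - (snd stA5 4 $ 1)" "M$2$2 = - (snd stA5 4 $ 2)"
    by (simp_all add: M_def DSA_def matrix_matrix_mult_def sum_2 J0A_ent)
  have tr: "M$1$1 + M$2$2 > 0" and b: "M$1$2 > 0" and c: "M$2$1 > 0" using numA unfolding Me by linarith+
  have dom: "dominant_eigenvalue (M**M) mu" and ev: "(M**M) *v v0 = mu *s v0" using H R by auto
  have E: "mu > 0 \<and> M *v v0 = sqrt mu *s v0" by (rule eig2_num[OF tr b c dom ev v])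
  have "J0A *v v0 = DSA *v (M *v v0)"
    by (simp add: M_def matrix_vector_mul_assoc matrix_mul_assoc DSA_sq matrix_mul_lid)
  also have "\<dots> = sqrt mu *s (DSA *v v0)" using E by (simp add: vector_scalar_commute)
  finally have e1: "J0A *v v0 = sqrt mu *s (DSA *v v0)" .
  have JD: "J1A ** DSA = DSA ** J0A" by (simp add: J1A_eq matrix_mul_assoc[symmetric] DSA_sq matrix_mul_rid)
  have "J1A *v (DSA *v v0) = M *v v0"
    by (simp add: M_def matrix_vector_mul_assoc JD)
  then have e2: "J1A *v (DSA *v v0) = sqrt mu *s v0" using E by simp
  show "mu > 0 \<and> J0A *v v0 = sqrt mu *s (DSA *v v0) \<and> J1A *v (DSA *v v0) = sqrt mu *s v0" using E e1 e2 by simp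
qed



definition cuB0 :: "nat \<Rightarrow> real" where "cuB0 = (\<lambda>i. if i = 1 then 0.137116837818847 else if i = 2 then 0.362883162181153 else if i = 3 then 0.242004617044047842 else if i = 4 then 0.257995382955952158 else 0)"
definition ruB0 :: "nat \<Rightarrow> real" where "ruB0 = (\<lambda>i. if i = 1 then 0.000000000000001 else if i = 2 then 0.000000000000001 else if i = 3 then 0.0000000000025 else if i = 4 then 0.0000000000025 else 0)"
definition cgB0 :: "nat \<Rightarrow> real^3" where "cgB0 = (\<lambda>i. if i = 1 then vector [1, 0, 0] else if i = 2 then vector [-1, 0, 0] else if i = 3 then vector [0, -1, -1] else if i = 4 then vector [0, 1, 0] else vector [0, 0, 1])"
definition rgB0 :: "nat \<Rightarrow> real^3" where "rgB0 = (\<lambda>i. 0)"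
definition cuB1 :: "nat \<Rightarrow> real" where "cuB1 = (\<lambda>i. if i = 1 then 0.107607294046931 else if i = 2 then 0.5 else if i = 3 then 0.1899216930701003 else if i = 4 then 0.2024710128829687 else 0)"
definition ruB1 :: "nat \<Rightarrow> real" where "ruB1 = (\<lambda>i. if i = 1 then 0.00000000000043 else if i = 2 then 0.0000000000035 else if i = 3 then 0.0000000000028 else if i = 4 then 0.0000000000028 else 0)"
definition cgB1 :: "nat \<Rightarrow> real^3" where "cgB1 = (\<lambda>i. if i = 1 then vector [0.6158881427406867, 0, 0] else if i = 2 then vector [0, 0, 0] else if i = 3 then vector [-0.2980955482518596, -0.7847854119061381, -0.7847854119061381] else if i = 4 then vector [-0.3177925944888272, 0.7847854119061381, 0] else vector [0, 0, 0.7847854119061381])"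
definition rgB1 :: "nat \<Rightarrow> real^3" where "rgB1 = (\<lambda>i. if i = 1 then vector [0.0000000000031, 0, 0] else if i = 2 then vector [0.0000000000097, 0, 0] else if i = 3 then vector [0.0000000000056, 0.0000000000031, 0.0000000000031] else if i = 4 then vector [0.0000000000057, 0.0000000000031, 0] else vector [0, 0, 0.0000000000031])"
definition cuB2 :: "nat \<Rightarrow> real" where "cuB2 = (\<lambda>i. if i = 1 then 0.1808349752567206 else if i = 2 then 0.355886570997414 else if i = 3 then 0.3191650247432794 else if i = 4 then 0.144113429002586 else 0)"
definition ruB2 :: "nat \<Rightarrow> real" where "ruB2 = (\<lambda>i. if i = 1 then 0.0000000000037 else if i = 2 then 0.000000000005 else if i = 3 then 0.0000000000099 else if i = 4 then 0.000000000003 else 0)"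
definition cgB2 :: "nat \<Rightarrow> real^3" where "cgB2 = (\<lambda>i. if i = 1 then vector [0.8418542940512346, 0.4769842828391698, 0.4769842828391698] else if i = 2 then vector [0.1610004038128794, -0.3975887746112578, -0.3975887746112578] else if i = 3 then vector [-0.8418542940512347, -0.4769842828391698, -0.4769842828391698] else if i = 4 then vector [-0.1610004038128795, 0.3975887746112578, -0.1610004038128795] else vector [0, 0, 0.5585891784241373])"
definition rgB2 :: "nat \<Rightarrow> real^3" where "rgB2 = (\<lambda>i. if i = 1 then vector [0.00000000003, 0.00000000002, 0.00000000002] else if i = 2 then vector [0.000000000017, 0.0000000000099, 0.0000000000099] else if i = 3 then vector [0.000000000047, 0.000000000043, 0.000000000043] else if i = 4 then vector [0.000000000009, 0.0000000000089, 0.0000000000051] else vector [0, 0, 0.0000000000061])"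
definition cuB3 :: "nat \<Rightarrow> real" where "cuB3 = (\<lambda>i. if i = 1 then 0.2782518284232218 else if i = 2 then 0.2635995331637733 else if i = 3 then 0.2364004668362267 else if i = 4 then 0.2217481715767782 else 0)"
definition ruB3 :: "nat \<Rightarrow> real" where "ruB3 = (\<lambda>i. if i = 1 then 0.000000000015 else if i = 2 then 0.000000000008 else if i = 3 then 0.000000000012 else if i = 4 then 0.000000000012 else 0)"
definition cgB3 :: "nat \<Rightarrow> real^3" where "cgB3 = (\<lambda>i. if i = 1 then vector [0.7123540357287408, -0.0149544076597656, 0.4633629442540805] else if i = 2 then vector [0.3851157025127189, 0.0470225721355245, -0.1710997870915157] else if i = 3 then vector [-0.385115702512719, -0.0470225721355245, -0.2426383493328795] else if i = 4 then vector [-0.7123540357287409, 0.0149544076597656, -0.4633629442540805] else vector [0, 0, 0.4137381364243952])"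
definition rgB3 :: "nat \<Rightarrow> real^3" where "rgB3 = (\<lambda>i. if i = 1 then vector [0.00000000015, 0.00000000011, 0.000000000097] else if i = 2 then vector [0.000000000047, 0.000000000035, 0.000000000031] else if i = 3 then vector [0.000000000072, 0.000000000063, 0.000000000057] else if i = 4 then vector [0.000000000098, 0.000000000075, 0.000000000064] else vector [0, 0, 0.000000000012])"
definition cuB4 :: "nat \<Rightarrow> real" where "cuB4 = (\<lambda>i. if i = 1 then 0.188926977204853 else if i = 2 then 0.5 else if i = 3 then 0.160510807286602 else if i = 4 then 0.150562215508545 else 0)"
definition ruB4 :: "nat \<Rightarrow> real" where "ruB4 = (\<lambda>i. if i = 1 then 0.000000000017 else if i = 2 then 0.00000000006 else if i = 3 then 0.000000000014 else if i = 4 then 0.000000000013 else 0)"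
definition cgB4 :: "nat \<Rightarrow> real^3" where "cgB4 = (\<lambda>i. if i = 1 then vector [0.5824762241895969, 0.0019101408098263, 0.2707169747025466] else if i = 2 then vector [-0.0000000000000002, 0, 0] else if i = 3 then vector [-0.1775428246386119, -0.0216779534676028, -0.2020402570605016] else if i = 4 then vector [-0.4049333995509851, 0.0197678126577766, -0.3495959695009722] else vector [0, 0, 0.2809192518589273])"
definition rgB4 :: "nat \<Rightarrow> real^3" where "rgB4 = (\<lambda>i. if i = 1 then vector [0.00000000018, 0.00000000012, 0.00000000012] else if i = 2 then vector [0.00000000053, 0.00000000035, 0.00000000035] else if i = 3 then vector [0.00000000011, 0.000000000076, 0.000000000077] else if i = 4 then vector [0.00000000013, 0.000000000082, 0.000000000085] else vector [0, 0, 0.000000000018])"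
definition cuB5 :: "nat \<Rightarrow> real" where "cuB5 = (\<lambda>i. if i = 1 then 0.1371168378188472 else if i = 2 then 0.3628831621811528 else if i = 3 then 0.2579953829559567 else if i = 4 then 0.2420046170440433 else 0)"
definition ruB5 :: "nat \<Rightarrow> real" where "ruB5 = (\<lambda>i. if i = 1 then 0.000000000023 else if i = 2 then 0.000000000072 else if i = 3 then 0.000000000066 else if i = 4 then 0.000000000062 else 0)"
definition cgB5 :: "nat \<Rightarrow> real^3" where "cgB5 = (\<lambda>i. if i = 1 then vector [0.3068116376961208, 0.001006141376686, 0.1425965814762454] else if i = 2 then vector [-0.3068116376961209, -0.001006141376686, -0.1425965814762453] else if i = 3 then vector [0.1977180909182598, -0.0332596158005119, -0.1002221236964032] else if i = 4 then vector [-0.19771809091826, 0.033259615800512, -0.3513105250282066] else vector [0, 0, 0.4515326487246098])"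
definition rgB5 :: "nat \<Rightarrow> real^3" where "rgB5 = (\<lambda>i. if i = 1 then vector [0.00000000027, 0.00000000015, 0.00000000018] else if i = 2 then vector [0.00000000072, 0.00000000043, 0.00000000047] else if i = 3 then vector [0.00000000073, 0.00000000039, 0.00000000047] else if i = 4 then vector [0.00000000073, 0.00000000039, 0.00000000051] else vector [0, 0, 0.00000000011])"
definition stB0 :: "(nat \<Rightarrow> real) \<times> (nat \<Rightarrow> real^3)" where "stB0 = (chartB P0B, cgB0)"
definition stB1 :: "(nat \<Rightarrow> real) \<times> (nat \<Rightarrow> real^3)" where "stB1 = adg_step LB 5 1 stB0"
definition stB2 :: "(nat \<Rightarrow> real) \<times> (nat \<Rightarrow> real^3)" where "stB2 = adg_step LB 5 3 stB1"
definition stB3 :: "(nat \<Rightarrow> real) \<times> (nat \<Rightarrow> real^3)" where "stB3 = adg_step LB 5 4 stB2"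
definition stB4 :: "(nat \<Rightarrow> real) \<times> (nat \<Rightarrow> real^3)" where "stB4 = adg_step LB 5 1 stB3"
definition stB5 :: "(nat \<Rightarrow> real) \<times> (nat \<Rightarrow> real^3)" where "stB5 = adg_step LB 5 2 stB4"
lemma condB1: "step_cond LB 5 1 cuB0 ruB0 cgB0 rgB0 cuB1 ruB1 cgB1 rgB1"
  unfolding step_cond_def ivl5 by (simp add: div_cond_def LB_vals cuB0_def ruB0_def cgB0_def rgB0_def cuB1_def ruB1_def cgB1_def rgB1_def forall_3)
lemma condB2: "step_cond LB 5 3 cuB1 ruB1 cgB1 rgB1 cuB2 ruB2 cgB2 rgB2"
  unfolding step_cond_def ivl5 by (simp add: div_cond_def LB_vals cuB1_def ruB1_def cgB1_def rgB1_def cuB2_def ruB2_def cgB2_def rgB2_def forall_3)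
lemma condB3: "step_cond LB 5 4 cuB2 ruB2 cgB2 rgB2 cuB3 ruB3 cgB3 rgB3"
  unfolding step_cond_def ivl5 by (simp add: div_cond_def LB_vals cuB2_def ruB2_def cgB2_def rgB2_def cuB3_def ruB3_def cgB3_def rgB3_def forall_3)
lemma condB4: "step_cond LB 5 1 cuB3 ruB3 cgB3 rgB3 cuB4 ruB4 cgB4 rgB4"
  unfolding step_cond_def ivl5 by (simp add: div_cond_def LB_vals cuB3_def ruB3_def cgB3_def rgB3_def cuB4_def ruB4_def cgB4_def rgB4_def forall_3)
lemma condB5: "step_cond LB 5 2 cuB4 ruB4 cgB4 rgB4 cuB5 ruB5 cgB5 rgB5"
  unfolding step_cond_def ivl5 by (simp add: div_cond_def LB_vals cuB4_def ruB4_def cgB4_def rgB4_def cuB5_def ruB5_def cgB5_def rgB5_def forall_3)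

lemma ballB0u: "\<forall>i\<in>{1..5}. bl (fst stB0 i) (cuB0 i) (ruB0 i)"
proof -
  have "bl (p_star + (-1/2)) 0.137116837818847 0.000000000000001" by (rule bl_shift[OF bl_p]) simp
  moreover have "bl (1 - p_star) 0.362883162181153 0.000000000000001" by (rule bl_refl[OF bl_p]) simp
  moreover have "bl (1/2 - d_star) 0.242004617044047842 0.0000000000025" by (rule bl_refl[OF bl_d]) simp
  ultimately show ?thesis using bl_d unfolding ivl5 by (simp add: stB0_def chartB_def P0B_def cuB0_def ruB0_def bl_def)
qed

lemma ballB0g: "\<forall>i\<in>{1..5}. \<forall>k. bl (snd stB0 i $ k) (cgB0 i $ k) (rgB0 i $ k)"
  by (simp add: stB0_def rgB0_def bl_def)

lemma stepB1: "(\<forall>i\<in>{1..5}. bl (fst stB1 i) (cuB1 i) (ruB1 i)) \<and> (\<forall>i\<in>{1..5}. \<forall>k. bl (snd stB1 i $ k) (cgB1 i $ k) (rgB1 i $ k))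
   \<and> (\<forall>i\<in>{1..5}. 1 + (\<Sum>l\<in>{1..5}. fst stB0 l * LB l 1) * LB i 1 \<noteq> 0)"
  using step_ball[OF ballB0u ballB0g condB1] unfolding stB1_def prod.collapse by blast
lemma ballB1u: "\<forall>i\<in>{1..5}. bl (fst stB1 i) (cuB1 i) (ruB1 i)" using stepB1 by blast
lemma ballB1g: "\<forall>i\<in>{1..5}. \<forall>k. bl (snd stB1 i $ k) (cgB1 i $ k) (rgB1 i $ k)" using stepB1 by blast
lemma denB0: "\<forall>i\<in>{1..5}. 1 + (\<Sum>l\<in>{1..5}. fst stB0 l * LB l 1) * LB i 1 \<noteq> 0" using stepB1 by blast
lemma fstB1: "ada_step LB 5 1 (fst stB0) = fst stB1" by (simp add: stB1_def fst_adg_step)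

lemma stepB2: "(\<forall>i\<in>{1..5}. bl (fst stB2 i) (cuB2 i) (ruB2 i)) \<and> (\<forall>i\<in>{1..5}. \<forall>k. bl (snd stB2 i $ k) (cgB2 i $ k) (rgB2 i $ k))
   \<and> (\<forall>i\<in>{1..5}. 1 + (\<Sum>l\<in>{1..5}. fst stB1 l * LB l 3) * LB i 3 \<noteq> 0)"
  using step_ball[OF ballB1u ballB1g condB2] unfolding stB2_def prod.collapse by blast
lemma ballB2u: "\<forall>i\<in>{1..5}. bl (fst stB2 i) (cuB2 i) (ruB2 i)" using stepB2 by blast
lemma ballB2g: "\<forall>i\<in>{1..5}. \<forall>k. bl (snd stB2 i $ k) (cgB2 i $ k) (rgB2 i $ k)" using stepB2 by blast
lemma denB1: "\<forall>i\<in>{1..5}. 1 + (\<Sum>l\<in>{1..5}. fst stB1 l * LB l 3) * LB i 3 \<noteq> 0" using stepB2 by blast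
lemma fstB2: "ada_step LB 5 3 (fst stB1) = fst stB2" by (simp add: stB2_def fst_adg_step)

lemma stepB3: "(\<forall>i\<in>{1..5}. bl (fst stB3 i) (cuB3 i) (ruB3 i)) \<and> (\<forall>i\<in>{1..5}. \<forall>k. bl (snd stB3 i $ k) (cgB3 i $ k) (rgB3 i $ k))
   \<and> (\<forall>i\<in>{1..5}. 1 + (\<Sum>l\<in>{1..5}. fst stB2 l * LB l 4) * LB i 4 \<noteq> 0)"
  using step_ball[OF ballB2u ballB2g condB3] unfolding stB3_def prod.collapse by blast
lemma ballB3u: "\<forall>i\<in>{1..5}. bl (fst stB3 i) (cuB3 i) (ruB3 i)" using stepB3 by blast
lemma ballB3g: "\<forall>i\<in>{1..5}. \<forall>k. bl (snd stB3 i $ k) (cgB3 i $ k) (rgB3 i $ k)" using stepB3 by blast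
lemma denB2: "\<forall>i\<in>{1..5}. 1 + (\<Sum>l\<in>{1..5}. fst stB2 l * LB l 4) * LB i 4 \<noteq> 0" using stepB3 by blast
lemma fstB3: "ada_step LB 5 4 (fst stB2) = fst stB3" by (simp add: stB3_def fst_adg_step)

lemma stepB4: "(\<forall>i\<in>{1..5}. bl (fst stB4 i) (cuB4 i) (ruB4 i)) \<and> (\<forall>i\<in>{1..5}. \<forall>k. bl (snd stB4 i $ k) (cgB4 i $ k) (rgB4 i $ k))
   \<and> (\<forall>i\<in>{1..5}. 1 + (\<Sum>l\<in>{1..5}. fst stB3 l * LB l 1) * LB i 1 \<noteq> 0)"
  using step_ball[OF ballB3u ballB3g condB4] unfolding stB4_def prod.collapse by blast
lemma ballB4u: "\<forall>i\<in>{1..5}. bl (fst stB4 i) (cuB4 i) (ruB4 i)" using stepB4 by blast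
lemma ballB4g: "\<forall>i\<in>{1..5}. \<forall>k. bl (snd stB4 i $ k) (cgB4 i $ k) (rgB4 i $ k)" using stepB4 by blast
lemma denB3: "\<forall>i\<in>{1..5}. 1 + (\<Sum>l\<in>{1..5}. fst stB3 l * LB l 1) * LB i 1 \<noteq> 0" using stepB4 by blast
lemma fstB4: "ada_step LB 5 1 (fst stB3) = fst stB4" by (simp add: stB4_def fst_adg_step)

lemma stepB5: "(\<forall>i\<in>{1..5}. bl (fst stB5 i) (cuB5 i) (ruB5 i)) \<and> (\<forall>i\<in>{1..5}. \<forall>k. bl (snd stB5 i $ k) (cgB5 i $ k) (rgB5 i $ k))
   \<and> (\<forall>i\<in>{1..5}. 1 + (\<Sum>l\<in>{1..5}. fst stB4 l * LB l 2) * LB i 2 \<noteq> 0)"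
  using step_ball[OF ballB4u ballB4g condB5] unfolding stB5_def prod.collapse by blast
lemma ballB5u: "\<forall>i\<in>{1..5}. bl (fst stB5 i) (cuB5 i) (ruB5 i)" using stepB5 by blast
lemma ballB5g: "\<forall>i\<in>{1..5}. \<forall>k. bl (snd stB5 i $ k) (cgB5 i $ k) (rgB5 i $ k)" using stepB5 by blast
lemma denB4: "\<forall>i\<in>{1..5}. 1 + (\<Sum>l\<in>{1..5}. fst stB4 l * LB l 2) * LB i 2 \<noteq> 0" using stepB5 by blast
lemma fstB5: "ada_step LB 5 2 (fst stB4) = fst stB5" by (simp add: stB5_def fst_adg_step)




lemma okB: "okrun LB 5 [1,3,4,1,2] (chartB P0B)"
proof -
  have c: "chartB P0B = fst stB0" by (simp add: stB0_def)
  show ?thesis unfolding c using denB0 denB1 denB2 denB3 denB4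
    by (simp only: okrun.simps fstB1 fstB2 fstB3 fstB4 fstB5 simp_thms)
qed

lemma chartB_deriv: "\<forall>i\<in>{1..5}. ((\<lambda>x. chartB x i) has_derivative (\<lambda>h. cgB0 i \<bullet> h)) (at P0B)"
proof -
  have e1: "(\<lambda>x. chartB x 1) = (\<lambda>x. -1/2 + 1 * x$1 + 0 * x$2 + 0 * x$3)" by (auto simp: chartB_def)
  have e2: "(\<lambda>x. chartB x 2) = (\<lambda>x. 1 + (-1) * x$1 + 0 * x$2 + 0 * x$3)" by (auto simp: chartB_def)
  have e3: "(\<lambda>x. chartB x 3) = (\<lambda>x. 1/2 + 0 * x$1 + (-1) * x$2 + (-1) * x$3)" by (auto simp: chartB_def)
  have e4: "(\<lambda>x. chartB x 4) = (\<lambda>x. 0 + 0 * x$1 + 1 * x$2 + 0 * x$3)" by (auto simp: chartB_def)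
  have e5: "(\<lambda>x. chartB x 5) = (\<lambda>x. 0 + 0 * x$1 + 0 * x$2 + 1 * x$3)" by (auto simp: chartB_def)
  have "((\<lambda>x. chartB x 1) has_derivative (\<lambda>h. vector [1, 0, 0] \<bullet> h)) (at P0B)" unfolding e1 by (rule hd_aff3)
  moreover have "((\<lambda>x. chartB x 2) has_derivative (\<lambda>h. vector [-1, 0, 0] \<bullet> h)) (at P0B)" unfolding e2 by (rule hd_aff3)
  moreover have "((\<lambda>x. chartB x 3) has_derivative (\<lambda>h. vector [0, -1, -1] \<bullet> h)) (at P0B)" unfolding e3 by (rule hd_aff3)
  moreover have "((\<lambda>x. chartB x 4) has_derivative (\<lambda>h. vector [0, 1, 0] \<bullet> h)) (at P0B)" unfolding e4 by (rule hd_aff3)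
  moreover have "((\<lambda>x. chartB x 5) has_derivative (\<lambda>h. vector [0, 0, 1] \<bullet> h)) (at P0B)" unfolding e5 by (rule hd_aff3)
  ultimately show ?thesis unfolding ivl5 by (simp add: cgB0_def)
qed

lemma runB_eq: "adg_run LB 5 [1,3,4,1,2] (chartB P0B, cgB0) = stB5"
  by (simp add: adg_run_def stB5_def stB4_def stB3_def stB2_def stB1_def stB0_def)

lemma runB_deriv: "\<forall>i\<in>{1..5}. ((\<lambda>x. ada_run LB 5 [1,3,4,1,2] (chartB x) i) has_derivative (\<lambda>h. snd stB5 i \<bullet> h)) (at P0B)"
proof -
  note X = spec[OF spec[OF run_deriv[of 5 P0B LB "[1,3,4,1,2]"], of chartB], of cgB0]
  show ?thesis using mp[OF mp[OF X chartB_deriv] okB] unfolding runB_eq .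
qed

lemma F0B_deriv: "(F0B has_derivative (\<lambda>h. vector [- (snd stB5 2 \<bullet> h), snd stB5 4 \<bullet> h, snd stB5 5 \<bullet> h])) (at P0B)"
proof -
  have e: "F0B = (\<lambda>x. vector [1 - ada_run LB 5 [1,3,4,1,2] (chartB x) 2, ada_run LB 5 [1,3,4,1,2] (chartB x) 4, ada_run LB 5 [1,3,4,1,2] (chartB x) 5])"
    by (rule ext) (simp add: F0B_def unchartB_def)
  have d2: "((\<lambda>x. ada_run LB 5 [1,3,4,1,2] (chartB x) 2) has_derivative (\<lambda>h. snd stB5 2 \<bullet> h)) (at P0B)"
    using runB_deriv by (simp add: ivl5)
  have d4: "((\<lambda>x. ada_run LB 5 [1,3,4,1,2] (chartB x) 4) has_derivative (\<lambda>h. snd stB5 4 \<bullet> h)) (at P0B)"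
    using runB_deriv by (simp add: ivl5)
  have d5: "((\<lambda>x. ada_run LB 5 [1,3,4,1,2] (chartB x) 5) has_derivative (\<lambda>h. snd stB5 5 \<bullet> h)) (at P0B)"
    using runB_deriv by (simp add: ivl5)
  show ?thesis unfolding e by (intro hd_vec3 hd_one_minus d2 d4 d5)
qed

lemma J0B_ent: "J0B $ 1 $ k = - (snd stB5 2 $ k)" "J0B $ 2 $ k = snd stB5 4 $ k" "J0B $ 3 $ k = snd stB5 5 $ k"
  unfolding J0B_def jacobian_def frechet_derivative_at[OF F0B_deriv, symmetric] matrix_def
  by (simp_all add: inner_axis)

lemma swp_bij5: "bij_betw swp {1..5} {1..5}"
  unfolding ivl5 bij_betw_def inj_on_def by (auto simp: swp_def)

definition SB :: "real^3 \<Rightarrow> real^3" where "SB x = vector [x$1, 1/2 - x$2 - x$3, x$3]"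

lemma F1B_eq: "F1B x = vector [1 - ada_run LB 5 [1,3,4,1,2] (chartB (SB x)) 2, ada_run LB 5 [1,3,4,1,2] (chartB (SB x)) 3, ada_run LB 5 [1,3,4,1,2] (chartB (SB x)) 5]"
proof -
  have L: "\<forall>j\<in>set [1,4,3,1,2]. \<forall>i\<in>{1..5}. LB (swp i) (swp j) = LB i j"
    unfolding ivl5 by (simp add: swp_def LB_vals)
  have C: "\<forall>i\<in>{1..5}. chartB x i = chartB (SB x) (swp i)"
    unfolding ivl5 by (simp add: swp_def chartB_def SB_def)
  have P: "\<forall>i\<in>{1..5}. ada_run LB 5 [1,4,3,1,2] (chartB x) i = ada_run LB 5 (map swp [1,4,3,1,2]) (chartB (SB x)) (swp i)"
    using run_perm[OF swp_bij5, where cs="[1,4,3,1,2]" and L=LB and \<tau>=swp] L C by blast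
  have m: "map swp [1,4,3,1,2] = [1,3,4,1,2]" by (simp add: swp_def)
  have "ada_run LB 5 [1,4,3,1,2] (chartB x) 2 = ada_run LB 5 [1,3,4,1,2] (chartB (SB x)) 2"
    using P m by (simp add: ivl5 swp_def)
  moreover have "ada_run LB 5 [1,4,3,1,2] (chartB x) 4 = ada_run LB 5 [1,3,4,1,2] (chartB (SB x)) 3"
    using P m by (simp add: ivl5 swp_def)
  moreover have "ada_run LB 5 [1,4,3,1,2] (chartB x) 5 = ada_run LB 5 [1,3,4,1,2] (chartB (SB x)) 5"
    using P m by (simp add: ivl5 swp_def)
  ultimately show ?thesis by (simp add: F1B_def unchartB_def)
qed

lemma SB_deriv: "(SB has_derivative (\<lambda>h. vector [h$1, - (h$2) - h$3, h$3])) (at x)"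
proof -
  have "((\<lambda>x::real^3. 1/2 - x$2 - x$3) has_derivative (\<lambda>h. 0 - h$2 - h$3)) (at x)"
    by (intro has_derivative_diff has_derivative_const hd_nth)
  then show ?thesis unfolding SB_def[abs_def] by (intro hd_vec3 hd_nth) simp
qed

lemma SB_P1B: "SB P1B = P0B" by (simp add: SB_def P1B_def P0B_def vec3_eq)

lemma F1B_deriv: "(F1B has_derivative (\<lambda>h. vector [- (snd stB5 2 \<bullet> vector [h$1, - (h$2) - h$3, h$3]),
   snd stB5 3 \<bullet> vector [h$1, - (h$2) - h$3, h$3], snd stB5 5 \<bullet> vector [h$1, - (h$2) - h$3, h$3]])) (at P1B)"
proof -
  have d: "((\<lambda>x. ada_run LB 5 [1,3,4,1,2] (chartB (SB x)) i) has_derivative (\<lambda>h. snd stB5 i \<bullet> vector [h$1, - (h$2) - h$3, h$3])) (at P1B)"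
    if "i \<in> {1..5}" for i
  proof -
    have "((\<lambda>y. ada_run LB 5 [1,3,4,1,2] (chartB y) i) has_derivative (\<lambda>h. snd stB5 i \<bullet> h)) (at (SB P1B))"
      using runB_deriv that SB_P1B by simp
    from has_derivative_compose[OF SB_deriv this] show ?thesis .
  qed
  have e: "F1B = (\<lambda>x. vector [1 - ada_run LB 5 [1,3,4,1,2] (chartB (SB x)) 2, ada_run LB 5 [1,3,4,1,2] (chartB (SB x)) 3, ada_run LB 5 [1,3,4,1,2] (chartB (SB x)) 5])"
    by (rule ext) (rule F1B_eq)
  show ?thesis unfolding e by (intro hd_vec3 hd_one_minus d) auto
qed

lemma J1B_ent: "J1B $ 1 $ k = - (snd stB5 2 \<bullet> vector [axis k 1 $ 1, - (axis k 1 $ 2) - axis k 1 $ 3, axis k 1 $ 3])"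
   "J1B $ 2 $ k = snd stB5 3 \<bullet> vector [axis k 1 $ 1, - (axis k 1 $ 2) - axis k 1 $ 3, axis k 1 $ 3]"
   "J1B $ 3 $ k = snd stB5 5 \<bullet> vector [axis k 1 $ 1, - (axis k 1 $ 2) - axis k 1 $ 3, axis k 1 $ 3]"
  unfolding J1B_def jacobian_def frechet_derivative_at[OF F1B_deriv, symmetric] matrix_def
  by simp_all

lemma invB: "\<forall>k. snd stB5 3 $ k = - (snd stB5 4 $ k) - snd stB5 5 $ k"
proof -
  have s0: "(\<Sum>i\<in>{1..5}. fst stB0 i) = 1" "\<forall>k. (\<Sum>i\<in>{1..5}. snd stB0 i $ k) = 0"
    unfolding ivl5 by (simp_all add: stB0_def chartB_def cgB0_def forall_3 P0B_def)
  have c1: "\<forall>i\<in>{1..5}. LB i 1 = 1 \<or> LB i 1 = -1" "\<exists>i\<in>{1..5}. LB i 1 = 1" "\<exists>i\<in>{1..5}. LB i 1 = -1"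
    unfolding ivl5 by (simp_all add: LB_vals)
  have c2: "\<forall>i\<in>{1..5}. LB i 2 = 1 \<or> LB i 2 = -1" "\<exists>i\<in>{1..5}. LB i 2 = 1" "\<exists>i\<in>{1..5}. LB i 2 = -1"
    unfolding ivl5 by (simp_all add: LB_vals)
  have c3: "\<forall>i\<in>{1..5}. LB i 3 = 1 \<or> LB i 3 = -1" "\<exists>i\<in>{1..5}. LB i 3 = 1" "\<exists>i\<in>{1..5}. LB i 3 = -1"
    unfolding ivl5 by (simp_all add: LB_vals)
  have c4: "\<forall>i\<in>{1..5}. LB i 4 = 1 \<or> LB i 4 = -1" "\<exists>i\<in>{1..5}. LB i 4 = 1" "\<exists>i\<in>{1..5}. LB i 4 = -1"
    unfolding ivl5 by (simp_all add: LB_vals)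
  note i1 = inv_step[where st=stB0 and m=5 and L=LB and j=1, OF s0 c1 denB0, folded stB1_def]
  note i2 = inv_step[where st=stB1 and m=5 and L=LB and j=3, OF i1(1,2) c3 denB1, folded stB2_def]
  note i3 = inv_step[where st=stB2 and m=5 and L=LB and j=4, OF i2(1,2) c4 denB2, folded stB3_def]
  note i4 = inv_step[where st=stB3 and m=5 and L=LB and j=1, OF i3(1,2) c1 denB3, folded stB4_def]
  note i5 = inv_step[where st=stB4 and m=5 and L=LB and j=2, OF i4(1,2) c2 denB4, folded stB5_def]
  have h: "\<forall>k. 2 * snd stB5 3 $ k + (2 * snd stB5 4 $ k + 2 * snd stB5 5 $ k) = 0" using i5(3) unfolding ivl5 by (simp add: LB_vals)
  show ?thesis
  proof
    fix k show "snd stB5 3 $ k = - (snd stB5 4 $ k) - snd stB5 5 $ k" using h[rule_format, of k] by linarith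
  qed
qed

lemma inner_vec3r: "h \<bullet> (vector [a, b, c] :: real^3) = h$1 * a + h$2 * b + h$3 * c"
  by (simp add: inner_vec_def sum_3)

lemma J1B_eq: "J1B = DSB ** J0B ** DSB"
  by (simp add: vec_eq_iff forall_3 matrix_matrix_mult_def sum_3 DSB_def J1B_ent J0B_ent inner_vec3r invB axis_def algebra_simps)

lemma DSB_sq: "DSB ** DSB = mat 1"
  by (simp add: vec_eq_iff forall_3 matrix_matrix_mult_def sum_3 DSB_def mat_def)

lemma numB: "-307/1000 \<le> snd stB5 2 $ 1 \<and> snd stB5 2 $ 1 \<le> -306/1000 \<and> -11/10000 \<le> snd stB5 2 $ 2 \<and> snd stB5 2 $ 2 \<le> -9/10000
  \<and> -198/1000 \<le> snd stB5 4 $ 1 \<and> snd stB5 4 $ 1 \<le> -197/1000 \<and> 33/1000 \<le> snd stB5 4 $ 2 \<and> snd stB5 4 $ 2 \<le> 34/1000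
  \<and> snd stB5 5 $ 1 = 0 \<and> snd stB5 5 $ 2 = 0 \<and> 451/1000 \<le> snd stB5 5 $ 3 \<and> snd stB5 5 $ 3 \<le> 452/1000"
proof -
  have N: "\<bar>snd stB5 2 $ 1 - cgB5 2 $ 1\<bar> \<le> rgB5 2 $ 1" "\<bar>snd stB5 2 $ 2 - cgB5 2 $ 2\<bar> \<le> rgB5 2 $ 2"
    "\<bar>snd stB5 4 $ 1 - cgB5 4 $ 1\<bar> \<le> rgB5 4 $ 1" "\<bar>snd stB5 4 $ 2 - cgB5 4 $ 2\<bar> \<le> rgB5 4 $ 2"
    "\<bar>snd stB5 5 $ 1 - cgB5 5 $ 1\<bar> \<le> rgB5 5 $ 1" "\<bar>snd stB5 5 $ 2 - cgB5 5 $ 2\<bar> \<le> rgB5 5 $ 2"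
    "\<bar>snd stB5 5 $ 3 - cgB5 5 $ 3\<bar> \<le> rgB5 5 $ 3"
    using ballB5g unfolding bl_def ivl5 by simp_all
  then show ?thesis unfolding cgB5_def rgB5_def abs_le_iff by (simp; linarith?)
qed

lemma mainB: "\<forall>mu (v0 :: real^3).
            dominant_eigenvalue (J1B ** J0B) mu \<and> (J1B ** J0B) *v v0 = mu *s v0 \<and> v0$1 = 1 \<longrightarrow>
            mu > 0 \<and> J0B *v v0 = sqrt mu *s (DSB *v v0) \<and> J1B *v (DSB *v v0) = sqrt mu *s v0"
proof (intro allI impI)
  fix mu and v0 :: "real^3"
  assume H: "dominant_eigenvalue (J1B ** J0B) mu \<and> (J1B ** J0B) *v v0 = mu *s v0 \<and> v0$1 = 1"
  define M where "M = DSB ** J0B"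
  have R: "J1B ** J0B = M ** M" by (simp add: J1B_eq M_def matrix_mul_assoc)
  have v: "v0 \<noteq> 0" using H by auto
  have Me: "M$1$1 = - (snd stB5 2 $ 1)" "M$1$2 = - (snd stB5 2 $ 2)" "M$2$1 = - (snd stB5 4 $ 1) - snd stB5 5 $ 1"
     "M$2$2 = - (snd stB5 4 $ 2) - snd stB5 5 $ 2" "M$3$1 = snd stB5 5 $ 1" "M$3$2 = snd stB5 5 $ 2" "M$3$3 = snd stB5 5 $ 3"
    by (simp_all add: M_def DSB_def matrix_matrix_mult_def sum_3 J0B_ent)
  have z1: "M$3$1 = 0" and z2: "M$3$2 = 0" using numB unfolding Me by simp_all
  have tr: "M$1$1 + M$2$2 > 0" and b: "M$1$2 > 0" and c: "M$2$1 > 0" using numB unfolding Me by linarith+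
  have X: "0 \<le> M$1$1 - M$2$2" "M$1$1 - M$2$2 \<le> 35/100" and Y: "M$1$2 \<le> 11/10000" and Z: "M$2$1 \<le> 2/10"
    using numB unfolding Me by linarith+
  have K: "(35/100)^2 + 4*(11/10000)*(2/10) \<le> (36/100::real)^2" "0 \<le> (36/100::real)" by (simp_all add: power2_eq_square)
  have G: "2 * M$3$3 - (M$1$1 + M$2$2) > 36/100" "2 * M$3$3 + (M$1$1 + M$2$2) > 36/100"
    using numB unfolding Me by linarith+
  have dom: "dominant_eigenvalue (M**M) mu" and ev: "(M**M) *v v0 = mu *s v0" using H R by auto
  have E: "mu > 0 \<and> M *v v0 = sqrt mu *s v0" by (rule eig3_num[OF z1 z2 tr b c X Y Z K G dom ev v])
  have "J0B *v v0 = DSB *v (M *v v0)"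
    by (simp add: M_def matrix_vector_mul_assoc matrix_mul_assoc DSB_sq matrix_mul_lid)
  also have "\<dots> = sqrt mu *s (DSB *v v0)" using E by (simp add: vector_scalar_commute)
  finally have e1: "J0B *v v0 = sqrt mu *s (DSB *v v0)" .
  have JD: "J1B ** DSB = DSB ** J0B" by (simp add: J1B_eq matrix_mul_assoc[symmetric] DSB_sq matrix_mul_rid)
  have "J1B *v (DSB *v v0) = M *v v0"
    by (simp add: M_def matrix_vector_mul_assoc JD)
  then have e2: "J1B *v (DSB *v v0) = sqrt mu *s v0" using E by simp
  show "mu > 0 \<and> J0B *v v0 = sqrt mu *s (DSB *v v0) \<and> J1B *v (DSB *v v0) = sqrt mu *s v0" using E e1 e2 by simp
qed


theorem lemma4:
  shows "(\<forall>mu (v0 :: real^2).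
            dominant_eigenvalue (J1A ** J0A) mu \<and> (J1A ** J0A) *v v0 = mu *s v0 \<and> v0$1 = 1 \<longrightarrow>
            mu > 0 \<and> J0A *v v0 = sqrt mu *s (DSA *v v0) \<and> J1A *v (DSA *v v0) = sqrt mu *s v0)
       \<and> (\<forall>mu (v0 :: real^3).
            dominant_eigenvalue (J1B ** J0B) mu \<and> (J1B ** J0B) *v v0 = mu *s v0 \<and> v0$1 = 1 \<longrightarrow>
            mu > 0 \<and> J0B *v v0 = sqrt mu *s (DSB *v v0) \<and> J1B *v (DSB *v v0) = sqrt mu *s v0)"
  using mainA mainB by (rule conjI)

end
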